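(* Let $D>1$ be fixed, $0<\lambda<\lambda_D$, and assume $\Gamma$ is a complete $D$-ary tree of depth $h$ with \[ h\le \underline h-\frac{\ln(\underline h)}{\ln(D)}+\frac{\ln(1-\frac1D)}{\ln(D)}. \] Then the total variation distance between $\mathbb{P}_1$ and $\mathbb{P}_0$ tends to $0$ as $n\to\infty$. Thus for any test $T(G)\in\{0,1\}$, $\mathbb{P}_1(T(G)=1)-\mathbb{P}_0(T(G)=1)\to0$.
   Context: Model: $\mathbb{P}_0$: $G\sim\mathcal G(n,\lambda/n)$; $\mathbb{P}_1$: $G=G_0\cup G'$ with $G_0\sim\mathcal G(n,\lambda/n)$ and $G'$ the image of $\Gamma$ under a uniformly random injection of its vertex set into $[n]$, independent of $G_0$. A complete $D$-ary tree of depth $h$ has root at depth $0$, each vertex at depth $<h$ has $D$ children, and $K=(D^{h+1}-1)/(D-1)$ vertices. $\psi_D(\mu)=\mathbb{P}(\mathrm{Poi}(\mu)\ge D)$; $p_*(D,\lambda)$ is the largest nonnegative root of $p=\psi_D(\lambda p)$; $\lambda_D=\sup\{\lambda>0:p_*(D,\lambda)=0\}$. $p_h$ is the probability that a Galton–Watson tree with offspring $\mathrm{Poi}(\lambda)$ contains a complete $D$-ary tree of depth $h$ rooted at its root, and $\underline h=\sup\{h>0:p_h>\ln(n)/n\}$. *)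

theory Defs
  imports "HOL-Probability.Probability"
begin

definition poi :: "real \<Rightarrow> nat pmf" where
  "poi mu = (if mu > 0 then poisson_pmf mu else return_pmf 0)"

definition psi :: "nat \<Rightarrow> real \<Rightarrow> real" where
  "psi D mu = measure_pmf.prob (poi mu) {D..}"

definition p_star :: "nat \<Rightarrow> real \<Rightarrow> real" where
  "p_star D lam = Sup {p. 0 \<le> p \<and> p = psi D (lam * p)}"

definition lambda_crit :: "nat \<Rightarrow> real" where
  "lambda_crit D = Sup {lam. lam > 0 \<and> p_star D lam = 0}"

datatype rtree = Node "rtree list"

fun iid_list :: "nat \<Rightarrow> 'a pmf \<Rightarrow> 'a list pmf" where
  "iid_list 0 p = return_pmf []"
| "iid_list (Suc k) p = bind_pmf p (\<lambda>x. map_pmf (Cons x) (iid_list k p))"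

fun gw :: "real \<Rightarrow> nat \<Rightarrow> rtree pmf" where
  "gw lam 0 = return_pmf (Node [])"
| "gw lam (Suc h) = bind_pmf (poi lam) (\<lambda>k. map_pmf Node (iid_list k (gw lam h)))"

fun contains_complete :: "nat \<Rightarrow> nat \<Rightarrow> rtree \<Rightarrow> bool" where
  "contains_complete D 0 t = True"
| "contains_complete D (Suc h) (Node ts) = (D \<le> length (filter (contains_complete D h) ts))"

definition p_h :: "nat \<Rightarrow> real \<Rightarrow> nat \<Rightarrow> real" where
  "p_h D lam h = measure_pmf.prob (gw lam h) {t. contains_complete D h t}"

definition h_low :: "nat \<Rightarrow> real \<Rightarrow> nat \<Rightarrow> nat" where
  "h_low D lam n = Sup {h. h > 0 \<and> p_h D lam h > ln (real n) / real n}"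

(* graphs on [n] = {0..<n}: sets of 2-element edges *)
definition pairs :: "nat \<Rightarrow> nat set set" where
  "pairs n = {e. \<exists>i j. i < j \<and> j < n \<and> e = {i, j}}"

definition erdos_renyi :: "nat \<Rightarrow> real \<Rightarrow> nat set set pmf" where
  "erdos_renyi n p = map_pmf (\<lambda>f. {e \<in> pairs n. f e}) (Pi_pmf (pairs n) False (\<lambda>_. bernoulli_pmf p))"

(* complete D-ary tree of depth h: vertices are words over {0..<D} of length <= h *)
definition tree_verts :: "nat \<Rightarrow> nat \<Rightarrow> nat list set" where
  "tree_verts D h = {w. length w \<le> h \<and> set w \<subseteq> {..<D}}"

definition tree_edges :: "nat \<Rightarrow> nat \<Rightarrow> nat list set set" where
  "tree_edges D h = {e. \<exists>w c. length w < h \<and> set w \<subseteq> {..<D} \<and> c < D \<and> e = {w, w @ [c]}}"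

definition injections :: "'a set \<Rightarrow> nat \<Rightarrow> ('a \<Rightarrow> nat) set" where
  "injections V n = {f. f \<in> extensional V \<and> f ` V \<subseteq> {..<n} \<and> inj_on f V}"

definition P0 :: "real \<Rightarrow> nat \<Rightarrow> nat set set pmf" where
  "P0 lam n = erdos_renyi n (lam / real n)"

definition P1 :: "real \<Rightarrow> nat \<Rightarrow> nat \<Rightarrow> nat \<Rightarrow> nat set set pmf" where
  "P1 lam D h n = bind_pmf (erdos_renyi n (lam / real n)) (\<lambda>G0.
      map_pmf (\<lambda>\<sigma>. G0 \<union> (\<lambda>e. \<sigma> ` e) ` tree_edges D h)
        (pmf_of_set (injections (tree_verts D h) n)))"

definition tv_dist :: "'a pmf \<Rightarrow> 'a pmf \<Rightarrow> real" where
  "tv_dist p q = (SUP A. \<bar>measure_pmf.prob p A - measure_pmf.prob q A\<bar>)"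

end

theory Submission
  imports Defs "HOL-Real_Asymp.Real_Asymp"
begin

lemma iid_count:
  "emeasure (measure_pmf (iid_list k p)) {ts. j \<le> length (filter Q ts)}
     \<le> ennreal (real (k choose j) * (measure_pmf.prob p {x. Q x}) ^ j)"
proof (induction k arbitrary: j)
  case 0
  then show ?case by (cases j) (auto simp: indicator_def)
next
  case (Suc k)
  define r where "r = measure_pmf.prob p {x. Q x}"
  have r0: "0 \<le> r" by (simp add: r_def)
  show ?case
  proof (cases j)
    case 0
    then show ?thesis by (simp add: measure_pmf.emeasure_eq_measure)
  next
    case (Suc i)
    have pre: "Cons x -` {ts. j \<le> length (filter Q ts)} =
      (if Q x then {ts. i \<le> length (filter Q ts)} else {ts. j \<le> length (filter Q ts)})" for x
      using Suc by auto
    have "emeasure (measure_pmf (iid_list (Suc k) p)) {ts. j \<le> length (filter Q ts)}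
       = (\<integral>\<^sup>+x. emeasure (measure_pmf (iid_list k p)) (Cons x -` {ts. j \<le> length (filter Q ts)}) \<partial>measure_pmf p)"
      by (simp add: map_pmf_rep_eq emeasure_distr)
    also have "\<dots> \<le> (\<integral>\<^sup>+x. ennreal (real (k choose i) * r ^ i) * indicator {x. Q x} x
                   + ennreal (real (k choose j) * r ^ j) \<partial>measure_pmf p)"
    proof (rule nn_integral_mono)
      fix x
      show "emeasure (measure_pmf (iid_list k p)) (Cons x -` {ts. j \<le> length (filter Q ts)})
         \<le> ennreal (real (k choose i) * r ^ i) * indicator {x. Q x} x + ennreal (real (k choose j) * r ^ j)"
      proof (cases "Q x")
        case True
        then show ?thesis unfolding pre using Suc.IH[of i] by (simp add: r_def add_increasing2)
      next
        case False
        then show ?thesis unfolding pre using Suc.IH[of j] by (simp add: r_def)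
      qed
    qed
    also have "\<dots> = ennreal (real (k choose i) * r ^ i) * r + ennreal (real (k choose j) * r ^ j)"
      by (simp add: nn_integral_add nn_integral_cmult_indicator measure_pmf.emeasure_eq_measure r_def
           measure_pmf.prob_space)
    also have "\<dots> = ennreal (real (Suc k choose j) * r ^ j)"
      using Suc r0 by (simp add: ennreal_mult'[symmetric] ennreal_plus[symmetric] algebra_simps del: ennreal_plus)
    finally show ?thesis by (simp add: r_def)
  qed
qed

lemma poisson_choose_sums:
  fixes l :: real and D :: nat
  shows "(\<lambda>k. l ^ k / fact k * exp (-l) * real (k choose D)) sums (l ^ D / fact D)"
proof -
  let ?f = "\<lambda>k. l ^ k / fact k * exp (-l) * real (k choose D)"
  have eq: "?f (i + D) = (l ^ D * exp (-l) / fact D) * (l ^ i /\<^sub>R fact i)" for i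
  proof -
    have "real ((i + D) choose D) = fact (i + D) / (fact D * fact i)"
      by (subst binomial_fact) auto
    then show ?thesis by (simp add: power_add field_simps)
  qed
  have "(\<lambda>i. ?f (i + D)) sums ((l ^ D * exp (-l) / fact D) * exp l)"
    unfolding eq by (intro sums_mult exp_converges)
  also have "(l ^ D * exp (-l) / fact D) * exp l = l ^ D / fact D"
    by (simp add: exp_minus field_simps)
  finally have 1: "(\<lambda>i. ?f (i + D)) sums (l ^ D / fact D)" .
  have z: "\<And>i. i < D \<Longrightarrow> ?f i = 0" by simp
  show ?thesis using 1 sums_zero_iff_shift[of D ?f, OF z] by simp
qed

lemma poisson_choose_nn:
  fixes l :: real assumes "l > 0"
  shows "(\<integral>\<^sup>+k. ennreal (real (k choose D)) \<partial>measure_pmf (poisson_pmf l)) = ennreal (l ^ D / fact D)"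
proof -
  have "(\<integral>\<^sup>+k. ennreal (real (k choose D)) \<partial>measure_pmf (poisson_pmf l))
      = (\<integral>\<^sup>+k. ennreal (l ^ k / fact k * exp (-l) * real (k choose D)) \<partial>count_space UNIV)"
    using assms by (simp add: nn_integral_measure_pmf ennreal_mult'[symmetric])
  also have "\<dots> = (\<Sum>k. ennreal (l ^ k / fact k * exp (-l) * real (k choose D)))"
    by (rule nn_integral_count_space_nat)
  also have "\<dots> = ennreal (l ^ D / fact D)"
    apply (rule sums_unique[symmetric])
    using assms poisson_choose_sums[of l D] by (subst sums_ennreal) auto
  finally show ?thesis .
qed


lemma ph_step:
  assumes "lam > 0"
  shows "p_h D lam (Suc h) \<le> lam ^ D / fact D * (p_h D lam h) ^ D"
proof -
  define r where "r = p_h D lam h"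
  have r0: "0 \<le> r" by (simp add: r_def p_h_def)
  have pre: "Node -` {t. contains_complete D (Suc h) t} = {ts. D \<le> length (filter (contains_complete D h) ts)}"
    by auto
  have "emeasure (measure_pmf (gw lam (Suc h))) {t. contains_complete D (Suc h) t}
      = (\<integral>\<^sup>+k. emeasure (measure_pmf (iid_list k (gw lam h))) {ts. D \<le> length (filter (contains_complete D h) ts)} \<partial>measure_pmf (poisson_pmf lam))"
    using assms by (simp add: poi_def map_pmf_rep_eq emeasure_distr pre)
  also have "\<dots> \<le> (\<integral>\<^sup>+k. ennreal (r ^ D) * ennreal (real (k choose D)) \<partial>measure_pmf (poisson_pmf lam))"
    apply (rule nn_integral_mono)
    using iid_count[of _ "gw lam h" D "contains_complete D h"] r0
    by (simp add: r_def p_h_def ennreal_mult'[symmetric] mult.commute)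
  also have "\<dots> = ennreal (r ^ D) * ennreal (lam ^ D / fact D)"
    using assms by (simp add: nn_integral_cmult poisson_choose_nn)
  also have "\<dots> = ennreal (lam ^ D / fact D * r ^ D)"
    using r0 assms by (simp add: ennreal_mult'[symmetric] mult.commute)
  finally show ?thesis
    using r0 assms by (simp add: p_h_def r_def measure_pmf.emeasure_eq_measure)
qed

lemma ph_nonneg: "0 \<le> p_h D lam h" by (simp add: p_h_def)

lemma ph_decay:
  assumes D: "D > 1" and lam: "lam > 0"
    and A: "A = lam ^ D / fact D" and th: "\<theta> = min 1 (1 / A)"
    and h0: "p_h D lam h0 \<le> \<theta> * exp (-1)"
  shows "p_h D lam (h0 + j) \<le> \<theta> * exp (- (real D ^ j))"
proof (induction j)
  case 0 then show ?case using h0 by simp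
next
  case (Suc j)
  have A0: "A > 0" using A lam by simp
  have t0: "0 < \<theta>" "\<theta> \<le> 1" "\<theta> \<le> 1 / A" using th A0 by auto
  have tD: "\<theta> ^ (D - 1) \<le> \<theta>" using power_decreasing[of 1 "D - 1" \<theta>] t0 D by simp
  have At: "A * \<theta> ^ (D - 1) \<le> 1"
  proof -
    have "A * \<theta> ^ (D - 1) \<le> A * \<theta>" using tD A0 by simp
    also have "\<dots> \<le> A * (1 / A)" using t0 A0 by (intro mult_left_mono) auto
    finally show ?thesis using A0 by simp
  qed
  let ?s = "real D ^ j"
  have "p_h D lam (h0 + Suc j) \<le> A * (p_h D lam (h0 + j)) ^ D"
    using ph_step[OF lam, of D "h0 + j"] A by simp
  also have "\<dots> \<le> A * (\<theta> * exp (- ?s)) ^ D"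
    using Suc.IH A0 ph_nonneg by (intro mult_left_mono power_mono) auto
  also have "\<dots> = (A * \<theta> ^ (D - 1)) * (\<theta> * exp (- ?s) ^ D)"
    using D by (simp add: power_mult_distrib algebra_simps flip: power_Suc)
  also have "\<dots> \<le> 1 * (\<theta> * exp (- ?s) ^ D)"
    using At t0 by (intro mult_right_mono) auto
  also have "exp (- ?s) ^ D = exp (- (real D ^ (Suc j)))"
    by (simp add: exp_of_nat_mult[symmetric] algebra_simps)
  finally show ?case by simp
qed


lemma ln_over_n_eventually:
  assumes "c > 0"
  shows "\<forall>\<^sub>F n in sequentially. ln (real n) / real n < c"
proof -
  have "(\<lambda>n. ln (real n) / real n) \<longlonglongrightarrow> 0" by real_asymp
  from order_tendstoD(2)[OF this assms] show ?thesis .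
qed

lemma hl_bound:
  assumes D: "D > 1" and lam: "lam > 0"
  shows "\<exists>C>0. \<forall>\<^sub>F n in sequentially. real D ^ h_low D lam n \<le> C * (ln (real n) + 1)"
proof -
  define A where "A = lam ^ D / fact D"
  define \<theta> where "\<theta> = min 1 (1 / A)"
  have A0: "A > 0" using lam by (simp add: A_def)
  have t0: "\<theta> > 0" using A0 by (simp add: \<theta>_def)
  show ?thesis
  proof (cases "\<exists>h0>0. p_h D lam h0 \<le> \<theta> * exp (-1)")
    case False
    define u where "u = Sup {h::nat. h > 0}"
    have ev: "\<forall>\<^sub>F n in sequentially. ln (real n) / real n < \<theta> * exp (-1)"
      using t0 by (intro ln_over_n_eventually) simp
    show ?thesis
    proof (intro exI[of _ "real D ^ u"] conjI)
      show "real D ^ u > 0" using D by simp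
      show "\<forall>\<^sub>F n in sequentially. real D ^ h_low D lam n \<le> real D ^ u * (ln (real n) + 1)"
        using ev eventually_ge_at_top[of 1]
      proof eventually_elim
        case (elim n)
        have "{h. h > 0 \<and> p_h D lam h > ln (real n) / real n} = {h::nat. h > 0}"
        proof -
          have "p_h D lam h > ln (real n) / real n" if "h > 0" for h
            using False elim that by (meson not_le less_trans)
          then show ?thesis by auto
        qed
        then have "h_low D lam n = u" by (simp add: h_low_def u_def)
        moreover have "ln (real n) \<ge> 0" using elim by simp
        ultimately show ?case using D by simp
      qed
    qed
  next
    case True
    then obtain h0 where h0: "h0 > 0" "p_h D lam h0 \<le> \<theta> * exp (-1)" by blast
    have dec: "p_h D lam (h0 + j) \<le> \<theta> * exp (- (real D ^ j))" for j
      using ph_decay[OF D lam A_def \<theta>_def h0(2)] .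
    define C where "C = real D ^ h0 * (\<bar>ln \<theta>\<bar> + 1)"
    have C0: "C > 0" using D by (simp add: C_def add_pos_nonneg)
    show ?thesis
    proof (intro exI[of _ C] conjI C0)
      show "\<forall>\<^sub>F n in sequentially. real D ^ h_low D lam n \<le> C * (ln (real n) + 1)"
        using eventually_ge_at_top[of 3]
      proof eventually_elim
        case (elim n)
        define X where "X = {h. h > 0 \<and> p_h D lam h > ln (real n) / real n}"
        have n3: "real n \<ge> 3" using elim by simp
        have lnn1: "ln (real n) \<ge> 1"
        proof -
          have "exp 1 \<le> (3::real)" using exp_le by simp
          also have "\<dots> \<le> real n" using n3 .
          finally show ?thesis using n3 by (subst ln_ge_iff) auto
        qed
        have lnpos: "ln (real n) / real n > 0" using lnn1 n3 by simp
        have key: "real D ^ (h - h0) < \<bar>ln \<theta>\<bar> + ln (real n)" if "h \<in> X" "h \<ge> h0" for h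
        proof -
          let ?s = "real D ^ (h - h0)"
          have "ln (real n) / real n < \<theta> * exp (- ?s)"
            using that dec[of "h - h0"] by (simp add: X_def)
          then have "ln (ln (real n) / real n) < ln (\<theta> * exp (- ?s))"
            using lnpos t0 by (subst ln_less_cancel_iff) auto
          then have "ln (ln (real n)) - ln (real n) < ln \<theta> - ?s"
            using lnn1 n3 t0 by (simp add: ln_div ln_mult)
          moreover have "ln (ln (real n)) \<ge> 0" using lnn1 by simp
          ultimately show ?thesis by linarith
        qed
        have fin: "finite X"
        proof (rule finite_subset[of _ "{..h0 + nat \<lceil>\<bar>ln \<theta>\<bar> + ln (real n)\<rceil>}"])
          show "X \<subseteq> {..h0 + nat \<lceil>\<bar>ln \<theta>\<bar> + ln (real n)\<rceil>}"
          proof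
            fix h assume hX: "h \<in> X"
            show "h \<in> {..h0 + nat \<lceil>\<bar>ln \<theta>\<bar> + ln (real n)\<rceil>}"
            proof (cases "h \<ge> h0")
              case True
              have "real (h - h0) \<le> real D ^ (h - h0)"
              proof -
                have "real (h - h0) < 2 ^ (h - h0)" by (rule of_nat_less_two_power)
                also have "\<dots> \<le> real D ^ (h - h0)" using D by (intro power_mono) auto
                finally show ?thesis by simp
              qed
              with key[OF hX True] have "real (h - h0) \<le> \<bar>ln \<theta>\<bar> + ln (real n)" by linarith
              then have "h - h0 \<le> nat \<lceil>\<bar>ln \<theta>\<bar> + ln (real n)\<rceil>" by linarith
              then show ?thesis by simp
            qed simp
          qed
        qed simp
        show ?case
        proof (cases "X = {}")
          case True
          then have "h_low D lam n = 0" by (simp add: h_low_def X_def[symmetric])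
          moreover have "1 \<le> C * (ln (real n) + 1)"
          proof -
            have "1 * 1 \<le> C" unfolding C_def using D by (intro mult_mono one_le_power) auto
            also have "\<dots> \<le> C * (ln (real n) + 1)" using C0 lnn1 by simp
            finally show ?thesis by simp
          qed
          ultimately show ?thesis by simp
        next
          case False
          define hl where "hl = Max X"
          have hl: "h_low D lam n = hl" using False fin by (simp add: h_low_def X_def[symmetric] hl_def Sup_nat_def)
          have hlX: "hl \<in> X" using False fin by (simp add: hl_def)
          have C1: "real D ^ h0 \<le> C * (ln (real n) + 1)"
          proof -
            have f: "1 * 1 \<le> (\<bar>ln \<theta>\<bar> + 1) * (ln (real n) + 1)"
              using lnn1 by (intro mult_mono) auto
            have "real D ^ h0 * 1 \<le> real D ^ h0 * ((\<bar>ln \<theta>\<bar> + 1) * (ln (real n) + 1))"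
              using f D by (intro mult_left_mono) auto
            then show ?thesis by (simp add: C_def mult.assoc)
          qed
          show ?thesis
          proof (cases "hl \<ge> h0")
            case True
            have "real D ^ hl = real D ^ h0 * real D ^ (hl - h0)"
              using True by (simp flip: power_add)
            also have "\<dots> \<le> real D ^ h0 * (\<bar>ln \<theta>\<bar> + ln (real n))"
              using key[OF hlX True] D by (intro mult_left_mono) auto
            also have "\<dots> \<le> C * (ln (real n) + 1)"
            proof -
              have "0 \<le> \<bar>ln \<theta>\<bar> * ln (real n)" using lnn1 by simp
              then have "\<bar>ln \<theta>\<bar> + ln (real n) \<le> (\<bar>ln \<theta>\<bar> + 1) * (ln (real n) + 1)"
                by (simp add: algebra_simps)
              then show ?thesis unfolding C_def mult.assoc using D by (intro mult_left_mono) auto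
            qed
            finally show ?thesis using hl by simp
          next
            case False
            have "real D ^ hl \<le> real D ^ h0" using False D by (intro power_increasing) auto
            with C1 show ?thesis using hl by simp
          qed
        qed
      qed
    qed
  qed
qed

lemma tree_verts_eq: "tree_verts D h = (\<Union>i\<in>{..h}. {w. set w \<subseteq> {..<D} \<and> length w = i})"
  by (auto simp: tree_verts_def)

lemma finite_tree_verts: "finite (tree_verts D h)"
  unfolding tree_verts_eq by (intro finite_UN_I) (auto intro: finite_lists_length_eq)

lemma card_tree_verts: "card (tree_verts D h) = (\<Sum>i\<le>h. D ^ i)"
  unfolding tree_verts_eq
  by (subst card_UN_disjoint) (auto intro: finite_lists_length_eq simp: card_lists_length_eq)

lemma card_tree_verts_le:
  assumes "D \<ge> 2" shows "real (card (tree_verts D h)) \<le> 2 * real D ^ h"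
proof -
  have "(\<Sum>i\<le>h. real D ^ i) \<le> 2 * real D ^ h"
  proof (induction h)
    case 0 then show ?case by simp
  next
    case (Suc h)
    have "(\<Sum>i\<le>Suc h. real D ^ i) \<le> 2 * real D ^ h + real D ^ Suc h" using Suc by simp
    also have "\<dots> \<le> 2 * real D ^ Suc h" using assms by simp
    finally show ?case .
  qed
  then show ?thesis by (simp add: card_tree_verts)
qed

lemma card_tree_verts_pos: "card (tree_verts D h) > 0"
  using finite_tree_verts[of D h] by (subst card_gt_0_iff) (auto simp: tree_verts_def intro!: exI[of _ "[]"])

lemma hyp_bound:
  assumes D: "D > 1"
    and hyp: "real h \<le> real hl - ln (real hl) / ln (real D) + ln (1 - 1 / real D) / ln (real D)"
  shows "hl \<ge> 1 \<and> real D ^ h \<le> real D ^ hl / real hl"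
proof -
  have lnD: "ln (real D) > 0" using D by simp
  have l1: "ln (1 - 1 / real D) < 0" using D by (intro ln_less_zero) auto
  have hl1: "hl \<ge> 1"
  proof (rule ccontr)
    assume "\<not> hl \<ge> 1"
    then have "hl = 0" by simp
    with hyp have "real h \<le> ln (1 - 1 / real D) / ln (real D)" by simp
    moreover have "ln (1 - 1 / real D) / ln (real D) < 0" using l1 lnD by (simp add: divide_neg_pos)
    ultimately show False by simp
  qed
  have "real h \<le> real hl - ln (real hl) / ln (real D)"
  proof -
    have "ln (1 - 1 / real D) / ln (real D) < 0" using l1 lnD by (simp add: divide_neg_pos)
    with hyp show ?thesis by linarith
  qed
  then have "real h * ln (real D) \<le> real hl * ln (real D) - ln (real hl)"
    using lnD by (simp add: field_simps)
  then have "exp (real h * ln (real D)) \<le> exp (real hl * ln (real D) - ln (real hl))" by simp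
  also have "\<dots> = real D ^ hl / real hl"
    using hl1 D by (simp add: exp_diff exp_of_nat_mult)
  finally show ?thesis using hl1 D by (simp add: exp_of_nat_mult)
qed

lemma K_asymp:
  fixes D :: nat and lam :: real and h :: "nat \<Rightarrow> nat" and M :: real
  assumes D: "D > 1" and lam: "0 < lam" and M: "M \<ge> 1"
    and hyp: "\<forall>\<^sub>F n in sequentially.
           real (h n) \<le> real (h_low D lam n) - ln (real (h_low D lam n)) / ln (real D)
                          + ln (1 - 1 / real D) / ln (real D)"
  shows "(\<lambda>n. real (card (tree_verts D (h n))) * M ^ card (tree_verts D (h n)) / real n) \<longlonglongrightarrow> 0"
proof -
  obtain C where C: "C > 0" "\<forall>\<^sub>F n in sequentially. real D ^ h_low D lam n \<le> C * (ln (real n) + 1)"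
    using hl_bound[OF D lam] by blast
  define H :: nat where "H = nat \<lceil>4 * C * ln M\<rceil> + 1"
  have H1: "real H \<ge> 1" by (simp add: H_def)
  have HC: "4 * C * ln M \<le> real H" unfolding H_def by linarith
  define a where "a = 2 * real D ^ H"
  define b where "b = 2 * C / real H"
  have a0: "a \<ge> 0" unfolding a_def by simp
  have b0: "b \<ge> 0" using C H1 unfolding b_def by simp
  have lnM: "ln M \<ge> 0" using M by simp
  have bM: "b * ln M \<le> 1 / 2"
  proof -
    have "b * ln M = 2 * C * ln M / real H" by (simp add: b_def)
    also have "\<dots> \<le> 1 / 2" using HC H1 by (simp add: field_simps)
    finally show ?thesis .
  qed
  define E where "E = exp (a * ln M) * exp (1 / 2)"
  define g where "g = (\<lambda>n::nat. E * a * (1 / sqrt (real n)) + E * b * ((ln (real n) + 1) / sqrt (real n)))"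
  have g: "g \<longlonglongrightarrow> 0"
  proof -
    have 1: "(\<lambda>n::nat. 1 / sqrt (real n)) \<longlonglongrightarrow> 0" by real_asymp
    have 2: "(\<lambda>n::nat. (ln (real n) + 1) / sqrt (real n)) \<longlonglongrightarrow> 0" by real_asymp
    show ?thesis unfolding g_def using tendsto_add[OF tendsto_mult_right_zero[OF 1] tendsto_mult_right_zero[OF 2]]
      by simp
  qed
  have ev: "\<forall>\<^sub>F n in sequentially. real (card (tree_verts D (h n))) * M ^ card (tree_verts D (h n)) / real n \<le> g n"
    using hyp C(2) eventually_ge_at_top[of 1]
  proof eventually_elim
    case (elim n)
    define hl where "hl = h_low D lam n"
    define K where "K = card (tree_verts D (h n))"
    define L where "L = ln (real n)"
    have L0: "L \<ge> 0" using elim by (simp add: L_def)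
    from hyp_bound[OF D elim(1)[folded hl_def]] have hl1: "hl \<ge> 1" and hb: "real D ^ h n \<le> real D ^ hl / real hl"
      by auto
    have K1: "real K \<le> 2 * (real D ^ hl / real hl)"
      using card_tree_verts_le[of D "h n"] D hb unfolding K_def by linarith
    have Kab: "real K \<le> a + b * (L + 1)"
    proof (cases "hl \<le> H")
      case True
      have "real D ^ hl / real hl \<le> real D ^ hl" using hl1 by (simp add: divide_le_eq mult_le_cancel_left1)
      also have "\<dots> \<le> real D ^ H" using True D by (intro power_increasing) auto
      finally have "real K \<le> a" using K1 by (simp add: a_def)
      moreover have "b * (L + 1) \<ge> 0" using b0 L0 by simp
      ultimately show ?thesis by linarith
    next
      case False
      have "real D ^ hl / real hl \<le> C * (L + 1) / real H"
      proof -
        have "real D ^ hl / real hl \<le> C * (L + 1) / real hl"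
          using elim(2) hl1 by (simp add: hl_def L_def divide_right_mono)
        also have "\<dots> \<le> C * (L + 1) / real H"
          using False H1 C L0 by (intro divide_left_mono) auto
        finally show ?thesis .
      qed
      then have "real K \<le> b * (L + 1)" using K1 by (simp add: b_def)
      then show ?thesis using a0 by linarith
    qed
    have Mpow: "M ^ K = exp (real K * ln M)" using M by (simp add: exp_of_nat_mult)
    have "M ^ K \<le> exp ((a + b * (L + 1)) * ln M)"
      unfolding Mpow using Kab lnM by (simp add: mult_right_mono)
    also have "\<dots> = exp (a * ln M) * exp (b * ln M * (L + 1))" by (simp add: algebra_simps exp_add)
    also have "\<dots> \<le> exp (a * ln M) * exp ((L + 1) / 2)"
      using bM L0 by (intro mult_left_mono) (auto intro: mult_right_mono)
    also have "exp ((L + 1) / 2) = exp (1 / 2) * sqrt (real n)"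
    proof -
      have "exp ((L + 1) / 2) = exp (1 / 2) * exp (L / 2)" by (simp add: exp_add[symmetric] add_divide_distrib)
      moreover have "exp (L / 2) = sqrt (real n)"
      proof -
        have "exp (L / 2) = exp ((1 / 2) * ln (real n))" by (simp add: L_def)
        also have "\<dots> = real n powr (1 / 2)" using elim(3) by (simp add: powr_def)
        also have "\<dots> = sqrt (real n)" by (rule powr_half_sqrt) simp
        finally show ?thesis .
      qed
      ultimately show ?thesis by simp
    qed
    finally have MK: "M ^ K \<le> E * sqrt (real n)" by (simp add: E_def mult.assoc)
    have "real K * M ^ K / real n \<le> (a + b * (L + 1)) * (E * sqrt (real n)) / real n"
      using Kab MK M by (intro divide_right_mono mult_mono) auto
    also have "\<dots> = g n"
    proof -
      have sq: "sqrt (real n) * sqrt (real n) = real n" by simp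
      have sp: "sqrt (real n) > 0" using elim(3) by simp
      have sn: "sqrt (real n) / real n = 1 / sqrt (real n)"
        using sp by (subst sq[symmetric]) (simp add: field_simps)
      have "(a + b * (L + 1)) * (E * sqrt (real n)) / real n = (E * a + E * b * (L + 1)) * (sqrt (real n) / real n)"
        by (simp add: algebra_simps add_divide_distrib)
      also have "\<dots> = g n" unfolding sn g_def L_def by (simp add: algebra_simps add_divide_distrib)
      finally show ?thesis .
    qed
    finally show ?case by (simp add: K_def)
  qed
  have ev0: "\<forall>\<^sub>F n in sequentially. 0 \<le> real (card (tree_verts D (h n))) * M ^ card (tree_verts D (h n)) / real n"
    using M by simp
  show ?thesis by (rule tendsto_sandwich[OF ev0 ev tendsto_const g])
qed

definition Bf :: "nat \<Rightarrow> real \<Rightarrow> (nat set \<Rightarrow> bool) pmf" where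
  "Bf n q = Pi_pmf (pairs n) False (\<lambda>_. bernoulli_pmf q)"
definition Bs :: "nat \<Rightarrow> real \<Rightarrow> nat set set \<Rightarrow> (nat set \<Rightarrow> bool) pmf" where
  "Bs n q S = Pi_pmf (pairs n) False (\<lambda>e. if e \<in> S then return_pmf True else bernoulli_pmf q)"
definition tog :: "nat \<Rightarrow> (nat set \<Rightarrow> bool) \<Rightarrow> nat set set" where
  "tog n f = {e \<in> pairs n. f e}"
definition Omf :: "nat \<Rightarrow> (nat set \<Rightarrow> bool) set" where
  "Omf n = PiE_dflt (pairs n) False (\<lambda>_. UNIV)"

lemma finite_pairs: "finite (pairs n)"
proof -
  have "pairs n \<subseteq> Pow {..<n}" by (auto simp: pairs_def)
  then show ?thesis by (rule finite_subset) simp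
qed

lemma finite_Omf: "finite (Omf n)"
  unfolding Omf_def using finite_pairs by (intro finite_PiE_dflt) auto

lemma set_Bf: "set_pmf (Bf n q) \<subseteq> Omf n"
  unfolding Bf_def Omf_def PiE_dflt_def using set_Pi_pmf_subset[OF finite_pairs[of n], of False "\<lambda>_. bernoulli_pmf q"] by blast

lemma set_Bs: "set_pmf (Bs n q S) \<subseteq> Omf n"
  unfolding Bs_def Omf_def PiE_dflt_def
  using set_Pi_pmf_subset[OF finite_pairs[of n], of False "\<lambda>e. if e \<in> S then return_pmf True else bernoulli_pmf q"] by blast

lemma measure_finite_support:
  assumes "set_pmf M \<subseteq> \<Omega>" "finite \<Omega>"
  shows "measure_pmf.prob M X = (\<Sum>x\<in>X \<inter> \<Omega>. pmf M x)"
proof -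
  have "measure_pmf.prob M X = measure_pmf.prob M (X \<inter> set_pmf M)" by (simp add: measure_Int_set_pmf)
  also have "X \<inter> set_pmf M = (X \<inter> \<Omega>) \<inter> set_pmf M" using assms by auto
  also have "measure_pmf.prob M \<dots> = measure_pmf.prob M (X \<inter> \<Omega>)" by (simp add: measure_Int_set_pmf)
  also have "\<dots> = (\<Sum>x\<in>X \<inter> \<Omega>. pmf M x)" using assms by (intro measure_measure_pmf_finite) auto
  finally show ?thesis .
qed

lemma erdos_renyi_tog: "erdos_renyi n q = map_pmf (tog n) (Bf n q)"
  by (simp add: erdos_renyi_def Bf_def tog_def[abs_def])

lemma Bs_map:
  assumes "S \<subseteq> pairs n"
  shows "map_pmf (tog n) (Bs n q S) = map_pmf (\<lambda>f. tog n f \<union> S) (Bf n q)"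
proof -
  have "Bs n q S = Pi_pmf (pairs n) False (\<lambda>e. bind_pmf (bernoulli_pmf q) (\<lambda>b. return_pmf (b \<or> e \<in> S)))"
    unfolding Bs_def by (intro Pi_pmf_cong) (auto simp: bind_return_pmf')
  also have "\<dots> = bind_pmf (Bf n q) (\<lambda>f. Pi_pmf (pairs n) False (\<lambda>e. return_pmf (f e \<or> e \<in> S)))"
    unfolding Bf_def by (rule Pi_pmf_bind[OF finite_pairs])
  also have "\<dots> = map_pmf (\<lambda>f e. if e \<in> pairs n then f e \<or> e \<in> S else False) (Bf n q)"
    by (simp add: finite_pairs map_pmf_def)
  finally have "map_pmf (tog n) (Bs n q S) = map_pmf (tog n \<circ> (\<lambda>f e. if e \<in> pairs n then f e \<or> e \<in> S else False)) (Bf n q)"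
    by (simp add: pmf.map_comp)
  also have "tog n \<circ> (\<lambda>f e. if e \<in> pairs n then f e \<or> e \<in> S else False) = (\<lambda>f. tog n f \<union> S)"
    using assms by (auto simp: tog_def fun_eq_iff)
  finally show ?thesis .
qed

lemma pmf_Bf:
  assumes "f \<in> Omf n"
  shows "pmf (Bf n q) f = (\<Prod>e\<in>pairs n. pmf (bernoulli_pmf q) (f e))"
  unfolding Bf_def using assms by (subst pmf_Pi') (auto simp: finite_pairs Omf_def PiE_dflt_def)

lemma pmf_Bs:
  assumes "f \<in> Omf n" "S \<subseteq> pairs n" "0 < q" "q \<le> 1"
  shows "pmf (Bs n q S) f = (if S \<subseteq> {e. f e} then pmf (Bf n q) f / q ^ card S else 0)"
proof -
  have fin: "finite S" using assms(2) finite_pairs by (rule finite_subset)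
  have split: "pairs n = S \<union> (pairs n - S)" using assms(2) by auto
  have "pmf (Bs n q S) f = (\<Prod>e\<in>pairs n. pmf (if e \<in> S then return_pmf True else bernoulli_pmf q) (f e))"
    unfolding Bs_def using assms(1) by (subst pmf_Pi') (auto simp: finite_pairs Omf_def PiE_dflt_def)
  also have "\<dots> = (\<Prod>e\<in>S. pmf (return_pmf True) (f e)) * (\<Prod>e\<in>pairs n - S. pmf (bernoulli_pmf q) (f e))"
    by (subst split, subst prod.union_disjoint) (auto intro: prod.cong simp: fin finite_pairs)
  also have "\<dots> = (if S \<subseteq> {e. f e} then pmf (Bf n q) f / q ^ card S else 0)"
  proof (cases "S \<subseteq> {e. f e}")
    case True
    have "pmf (Bf n q) f = (\<Prod>e\<in>S. pmf (bernoulli_pmf q) (f e)) * (\<Prod>e\<in>pairs n - S. pmf (bernoulli_pmf q) (f e))"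
      unfolding pmf_Bf[OF assms(1)] by (subst split, subst prod.union_disjoint) (auto simp: fin finite_pairs)
    also have "(\<Prod>e\<in>S. pmf (bernoulli_pmf q) (f e)) = q ^ card S"
      using True assms by (subst prod.cong[OF refl, of _ _ "\<lambda>_. q"]) auto
    finally have 1: "pmf (Bf n q) f = q ^ card S * (\<Prod>e\<in>pairs n - S. pmf (bernoulli_pmf q) (f e))" .
    have 2: "(\<Prod>e\<in>S. pmf (return_pmf True) (f e)) = 1"
      using True by (intro prod.neutral) (auto simp: indicator_def)
    show ?thesis using True 1 2 assms(3) by simp
  next
    case False
    then obtain e where "e \<in> S" "\<not> f e" by auto
    then have "(\<Prod>e\<in>S. pmf (return_pmf True) (f e)) = 0"
      using fin by (intro prod_zero) (auto simp: indicator_def)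
    then show ?thesis using False by simp
  qed
  finally show ?thesis .
qed

lemma sum_Bf_sub:
  assumes "T \<subseteq> pairs n" "0 \<le> q" "q \<le> 1"
  shows "(\<Sum>f\<in>Omf n. pmf (Bf n q) f * (if T \<subseteq> {e. f e} then 1 else 0)) = q ^ card T"
proof -
  have fin: "finite T" using assms(1) finite_pairs by (rule finite_subset)
  have "(\<Sum>f\<in>Omf n. pmf (Bf n q) f * (if T \<subseteq> {e. f e} then 1 else 0))
      = (\<Sum>f\<in>{f. T \<subseteq> {e. f e}} \<inter> Omf n. pmf (Bf n q) f)"
    by (simp add: Int_def sum.inter_filter finite_Omf if_distrib cong: if_cong)
      (simp add: sum.inter_filter[symmetric] finite_Omf Collect_conj_eq Int_commute)
  also have "\<dots> = measure_pmf.prob (Bf n q) {f. T \<subseteq> {e. f e}}"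
    by (rule measure_finite_support[OF set_Bf finite_Omf, symmetric])
  also have "{f. T \<subseteq> {e. f e}} = Pi (pairs n) (\<lambda>e. if e \<in> T then {True} else UNIV)"
    using assms(1) by (auto simp: Pi_def)
  also have "measure_pmf.prob (Bf n q) \<dots> = (\<Prod>e\<in>pairs n. measure_pmf.prob (bernoulli_pmf q) (if e \<in> T then {True} else UNIV))"
    unfolding Bf_def by (rule measure_Pi_pmf_Pi[OF finite_pairs])
  also have "\<dots> = (\<Prod>e\<in>pairs n. if e \<in> T then q else 1)"
    using assms by (intro prod.cong) (auto simp: measure_pmf_single)
  also have "\<dots> = q ^ card T"
    using assms(1) fin finite_pairs by (simp add: prod.If_cases Int_absorb1 Int_absorb2)
  finally show ?thesis .
qed

definition ind :: "nat set set \<Rightarrow> (nat set \<Rightarrow> bool) \<Rightarrow> real" where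
  "ind T f = (if T \<subseteq> {e. f e} then 1 else 0)"

lemma ind_mult: "ind T f * ind T' f = ind (T \<union> T') f"
  by (simp add: ind_def)

lemma sum_Bf_ind:
  assumes "T \<subseteq> pairs n" "0 \<le> q" "q \<le> 1"
  shows "(\<Sum>f\<in>Omf n. pmf (Bf n q) f * ind T f) = q ^ card T"
  using sum_Bf_sub[OF assms] by (simp add: ind_def)

lemma sum_Bf_one:
  assumes "0 \<le> q" "q \<le> 1"
  shows "(\<Sum>f\<in>Omf n. pmf (Bf n q) f) = 1"
  using sum_Bf_ind[of "{}" n q] assms by (simp add: ind_def)

lemma P1_as_bind:
  assumes I: "finite I" "I \<noteq> {}" and S: "\<And>\<sigma>. \<sigma> \<in> I \<Longrightarrow> S \<sigma> \<subseteq> pairs n"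
  shows "bind_pmf (erdos_renyi n q) (\<lambda>G0. map_pmf (\<lambda>\<sigma>. G0 \<union> S \<sigma>) (pmf_of_set I))
       = bind_pmf (pmf_of_set I) (\<lambda>\<sigma>. map_pmf (tog n) (Bs n q (S \<sigma>)))"
proof -
  have "bind_pmf (erdos_renyi n q) (\<lambda>G0. map_pmf (\<lambda>\<sigma>. G0 \<union> S \<sigma>) (pmf_of_set I))
      = bind_pmf (Bf n q) (\<lambda>f. bind_pmf (pmf_of_set I) (\<lambda>\<sigma>. return_pmf (tog n f \<union> S \<sigma>)))"
    unfolding erdos_renyi_tog bind_map_pmf by (simp add: map_pmf_def)
  also have "\<dots> = bind_pmf (pmf_of_set I) (\<lambda>\<sigma>. bind_pmf (Bf n q) (\<lambda>f. return_pmf (tog n f \<union> S \<sigma>)))"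
    by (rule bind_commute_pmf)
  also have "\<dots> = bind_pmf (pmf_of_set I) (\<lambda>\<sigma>. map_pmf (tog n) (Bs n q (S \<sigma>)))"
  proof (intro bind_pmf_cong refl)
    fix \<sigma> assume "\<sigma> \<in> set_pmf (pmf_of_set I)"
    then have "\<sigma> \<in> I" using I by simp
    then have "map_pmf (tog n) (Bs n q (S \<sigma>)) = map_pmf (\<lambda>f. tog n f \<union> S \<sigma>) (Bf n q)" by (rule Bs_map[OF S])
    then show "bind_pmf (Bf n q) (\<lambda>f. return_pmf (tog n f \<union> S \<sigma>)) = map_pmf (tog n) (Bs n q (S \<sigma>))"
      by (simp add: map_pmf_def)
  qed
  finally show ?thesis .
qed

lemma set_map_tog: "set_pmf (map_pmf (tog n) M) \<subseteq> Pow (pairs n)"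
  by (auto simp: tog_def)

lemma prob_bind_of_set:
  assumes I: "finite I" "I \<noteq> {}" and sup: "\<And>\<sigma>. \<sigma> \<in> I \<Longrightarrow> set_pmf (Q \<sigma>) \<subseteq> \<Omega>" and fin: "finite \<Omega>"
  shows "measure_pmf.prob (bind_pmf (pmf_of_set I) Q) A = (\<Sum>\<sigma>\<in>I. measure_pmf.prob (Q \<sigma>) A) / card I"
proof -
  have "set_pmf (bind_pmf (pmf_of_set I) Q) \<subseteq> \<Omega>" using I sup by auto
  then have "measure_pmf.prob (bind_pmf (pmf_of_set I) Q) A = (\<Sum>x\<in>A \<inter> \<Omega>. pmf (bind_pmf (pmf_of_set I) Q) x)"
    using fin by (rule measure_finite_support)
  also have "\<dots> = (\<Sum>x\<in>A \<inter> \<Omega>. (\<Sum>\<sigma>\<in>I. pmf (Q \<sigma>) x) / card I)"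
    using I by (simp add: pmf_bind_pmf_of_set)
  also have "\<dots> = (\<Sum>\<sigma>\<in>I. (\<Sum>x\<in>A \<inter> \<Omega>. pmf (Q \<sigma>) x)) / card I"
    by (simp add: sum_divide_distrib[symmetric] sum.swap[of _ _ I])
  also have "\<dots> = (\<Sum>\<sigma>\<in>I. measure_pmf.prob (Q \<sigma>) A) / card I"
    using sup fin by (intro arg_cong2[where f="(/)"] sum.cong refl measure_finite_support[symmetric]) auto
  finally show ?thesis .
qed


lemma q_ratio:
  fixes q :: real
  assumes "finite S" "finite S'" "q > 0"
  shows "q ^ card (S \<union> S') / (q ^ card S * q ^ card S') = (1 / q) ^ card (S \<inter> S')"
proof -
  have "card (S \<union> S') + card (S \<inter> S') = card S + card S'" using card_Un_Int[OF assms(1,2)] by simp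
  then have "q ^ card (S \<union> S') * q ^ card (S \<inter> S') = q ^ card S * q ^ card S'"
    using power_add[of q "card (S \<union> S')" "card (S \<inter> S')"] power_add[of q "card S" "card S'"] by simp
  then show ?thesis using assms by (simp add: field_simps power_one_over)
qed

lemma tv_generic:
  assumes I: "finite I" "I \<noteq> {}" and S: "\<And>\<sigma>. \<sigma> \<in> I \<Longrightarrow> S \<sigma> \<subseteq> pairs n" and q: "0 < q" "q \<le> 1"
  shows "\<bar>measure_pmf.prob (bind_pmf (erdos_renyi n q) (\<lambda>G0. map_pmf (\<lambda>\<sigma>. G0 \<union> S \<sigma>) (pmf_of_set I))) A
          - measure_pmf.prob (erdos_renyi n q) A\<bar>
       \<le> sqrt ((\<Sum>\<sigma>\<in>I. \<Sum>\<sigma>'\<in>I. (1 / q) ^ card (S \<sigma> \<inter> S \<sigma>')) / (real (card I))\<^sup>2 - 1)"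
proof -
  define c where "c = real (card I)"
  have c0: "c > 0" using I by (simp add: c_def card_gt_0_iff)
  define pB where "pB = pmf (Bf n q)"
  define X where "X = tog n -` A \<inter> Omf n"
  define a where "a = (\<lambda>\<sigma> f. ind (S \<sigma>) f / q ^ card (S \<sigma>))"
  define L where "L = (\<lambda>f. (\<Sum>\<sigma>\<in>I. a \<sigma> f) / c)"
  have finS: "finite (S \<sigma>)" if "\<sigma> \<in> I" for \<sigma> using S[OF that] finite_pairs by (rule finite_subset)
  have XO: "X \<subseteq> Omf n" by (simp add: X_def)
  have finX: "finite X" using XO finite_Omf by (rule finite_subset)
  have pB0: "pB f \<ge> 0" for f by (simp add: pB_def)
  have each: "measure_pmf.prob (map_pmf (tog n) (Bs n q (S \<sigma>))) A = (\<Sum>f\<in>X. pB f * a \<sigma> f)" if "\<sigma> \<in> I" for \<sigma>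
  proof -
    have "measure_pmf.prob (map_pmf (tog n) (Bs n q (S \<sigma>))) A = measure_pmf.prob (Bs n q (S \<sigma>)) (tog n -` A)"
      by simp
    also have "\<dots> = (\<Sum>f\<in>X. pmf (Bs n q (S \<sigma>)) f)"
      unfolding X_def by (rule measure_finite_support[OF set_Bs finite_Omf])
    also have "\<dots> = (\<Sum>f\<in>X. pB f * a \<sigma> f)"
    proof (intro sum.cong refl)
      fix f assume "f \<in> X"
      then have "f \<in> Omf n" using XO by auto
      then show "pmf (Bs n q (S \<sigma>)) f = pB f * a \<sigma> f"
        using pmf_Bs[OF _ S[OF that] q] by (simp add: pB_def a_def ind_def)
    qed
    finally show ?thesis .
  qed
  have P1: "measure_pmf.prob (bind_pmf (erdos_renyi n q) (\<lambda>G0. map_pmf (\<lambda>\<sigma>. G0 \<union> S \<sigma>) (pmf_of_set I))) A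
      = (\<Sum>f\<in>X. pB f * L f)"
  proof -
    have "measure_pmf.prob (bind_pmf (erdos_renyi n q) (\<lambda>G0. map_pmf (\<lambda>\<sigma>. G0 \<union> S \<sigma>) (pmf_of_set I))) A
        = (\<Sum>\<sigma>\<in>I. measure_pmf.prob (map_pmf (tog n) (Bs n q (S \<sigma>))) A) / c"
    proof -
      have "bind_pmf (erdos_renyi n q) (\<lambda>G0. map_pmf (\<lambda>\<sigma>. G0 \<union> S \<sigma>) (pmf_of_set I))
          = bind_pmf (pmf_of_set I) (\<lambda>\<sigma>. map_pmf (tog n) (Bs n q (S \<sigma>)))"
        by (rule P1_as_bind[OF I S])
      moreover have "measure_pmf.prob (bind_pmf (pmf_of_set I) (\<lambda>\<sigma>. map_pmf (tog n) (Bs n q (S \<sigma>)))) A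
          = (\<Sum>\<sigma>\<in>I. measure_pmf.prob (map_pmf (tog n) (Bs n q (S \<sigma>))) A) / c"
        unfolding c_def by (rule prob_bind_of_set[OF I set_map_tog]) (simp add: finite_pairs)
      ultimately show ?thesis by simp
    qed
    also have "\<dots> = (\<Sum>\<sigma>\<in>I. \<Sum>f\<in>X. pB f * a \<sigma> f) / c" using each by simp
    also have "\<dots> = (\<Sum>f\<in>X. pB f * L f)"
      unfolding L_def by (simp add: sum.swap[of _ I] sum_divide_distrib sum_distrib_left)
    finally show ?thesis .
  qed
  have P0: "measure_pmf.prob (erdos_renyi n q) A = (\<Sum>f\<in>X. pB f)"
    unfolding erdos_renyi_tog X_def pB_def by (simp add: measure_finite_support[OF set_Bf finite_Omf])
  have "\<bar>(\<Sum>f\<in>X. pB f * L f) - (\<Sum>f\<in>X. pB f)\<bar> = \<bar>\<Sum>f\<in>X. pB f * (L f - 1)\<bar>"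
    by (simp add: algebra_simps sum_subtractf)
  also have "\<dots> \<le> (\<Sum>f\<in>X. \<bar>pB f * (L f - 1)\<bar>)" by (rule sum_abs)
  also have "\<dots> \<le> (\<Sum>f\<in>Omf n. \<bar>pB f * (L f - 1)\<bar>)"
    using XO finite_Omf by (intro sum_mono2) auto
  also have "\<dots> = (\<Sum>f\<in>Omf n. sqrt (pB f) * (sqrt (pB f) * \<bar>L f - 1\<bar>))"
    using pB0 by (intro sum.cong refl) (simp add: abs_mult mult.assoc[symmetric])
  also have "\<dots> \<le> sqrt (\<Sum>f\<in>Omf n. pB f * (L f - 1)\<^sup>2)"
  proof (rule real_le_rsqrt)
    have "(\<Sum>f\<in>Omf n. sqrt (pB f) * (sqrt (pB f) * \<bar>L f - 1\<bar>))\<^sup>2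
        \<le> (\<Sum>f\<in>Omf n. (sqrt (pB f))\<^sup>2) * (\<Sum>f\<in>Omf n. (sqrt (pB f) * \<bar>L f - 1\<bar>)\<^sup>2)"
      by (rule Cauchy_Schwarz_ineq_sum)
    also have "(\<Sum>f\<in>Omf n. (sqrt (pB f))\<^sup>2) = 1"
      using pB0 sum_Bf_one[of q n] q by (simp add: pB_def)
    also have "(\<Sum>f\<in>Omf n. (sqrt (pB f) * \<bar>L f - 1\<bar>)\<^sup>2) = (\<Sum>f\<in>Omf n. pB f * (L f - 1)\<^sup>2)"
      using pB0 by (intro sum.cong refl) (simp add: power_mult_distrib)
    finally show "(\<Sum>f\<in>Omf n. sqrt (pB f) * (sqrt (pB f) * \<bar>L f - 1\<bar>))\<^sup>2 \<le> (\<Sum>f\<in>Omf n. pB f * (L f - 1)\<^sup>2)"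
      by simp
  qed
  also have "(\<Sum>f\<in>Omf n. pB f * (L f - 1)\<^sup>2) = (\<Sum>\<sigma>\<in>I. \<Sum>\<sigma>'\<in>I. (1 / q) ^ card (S \<sigma> \<inter> S \<sigma>')) / c\<^sup>2 - 1"
  proof -
    have s1: "(\<Sum>f\<in>Omf n. pB f) = 1" using sum_Bf_one[of q n] q by (simp add: pB_def)
    have sa: "(\<Sum>f\<in>Omf n. pB f * a \<sigma> f) = 1" if "\<sigma> \<in> I" for \<sigma>
    proof -
      have "(\<Sum>f\<in>Omf n. pB f * a \<sigma> f) = (\<Sum>f\<in>Omf n. pB f * ind (S \<sigma>) f) / q ^ card (S \<sigma>)"
        by (simp add: a_def sum_divide_distrib)
      also have "\<dots> = 1" using sum_Bf_ind[OF S[OF that]] q by (simp add: pB_def)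
      finally show ?thesis .
    qed
    have sL: "(\<Sum>f\<in>Omf n. pB f * L f) = 1"
    proof -
      have "(\<Sum>f\<in>Omf n. pB f * L f) = (\<Sum>\<sigma>\<in>I. \<Sum>f\<in>Omf n. pB f * a \<sigma> f) / c"
        unfolding L_def by (simp add: sum.swap[of _ I] sum_divide_distrib sum_distrib_left)
      also have "\<dots> = 1" using sa c0 by (simp add: c_def)
      finally show ?thesis .
    qed
    have saa: "(\<Sum>f\<in>Omf n. pB f * (a \<sigma> f * a \<sigma>' f)) = (1 / q) ^ card (S \<sigma> \<inter> S \<sigma>')"
      if "\<sigma> \<in> I" "\<sigma>' \<in> I" for \<sigma> \<sigma>'
    proof -
      have "(\<Sum>f\<in>Omf n. pB f * (a \<sigma> f * a \<sigma>' f))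
          = (\<Sum>f\<in>Omf n. pB f * ind (S \<sigma> \<union> S \<sigma>') f) / (q ^ card (S \<sigma>) * q ^ card (S \<sigma>'))"
        by (simp add: a_def sum_divide_distrib ind_mult[symmetric])
      also have "\<dots> = q ^ card (S \<sigma> \<union> S \<sigma>') / (q ^ card (S \<sigma>) * q ^ card (S \<sigma>'))"
        using sum_Bf_ind[of "S \<sigma> \<union> S \<sigma>'" n q] S[OF that(1)] S[OF that(2)] q by (simp add: pB_def)
      also have "\<dots> = (1 / q) ^ card (S \<sigma> \<inter> S \<sigma>')"
        by (rule q_ratio[OF finS[OF that(1)] finS[OF that(2)] q(1)])
      finally show ?thesis .
    qed
    have sL2: "(\<Sum>f\<in>Omf n. pB f * (L f)\<^sup>2) = (\<Sum>\<sigma>\<in>I. \<Sum>\<sigma>'\<in>I. (1 / q) ^ card (S \<sigma> \<inter> S \<sigma>')) / c\<^sup>2"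
    proof -
      have "(\<Sum>f\<in>Omf n. pB f * (L f)\<^sup>2) = (\<Sum>f\<in>Omf n. (\<Sum>\<sigma>\<in>I. \<Sum>\<sigma>'\<in>I. pB f * (a \<sigma> f * a \<sigma>' f)) / c\<^sup>2)"
      proof (intro sum.cong refl)
        fix f
        have sp: "(\<Sum>\<sigma>\<in>I. a \<sigma> f) * (\<Sum>\<sigma>'\<in>I. a \<sigma>' f) = (\<Sum>\<sigma>\<in>I. \<Sum>\<sigma>'\<in>I. a \<sigma> f * a \<sigma>' f)"
          by (rule sum_product)
        have "pB f * (L f)\<^sup>2 = pB f * ((\<Sum>\<sigma>\<in>I. a \<sigma> f) * (\<Sum>\<sigma>'\<in>I. a \<sigma>' f)) / c\<^sup>2"
          unfolding L_def by (simp add: power_divide power2_eq_square)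
        also have "\<dots> = (\<Sum>\<sigma>\<in>I. \<Sum>\<sigma>'\<in>I. pB f * (a \<sigma> f * a \<sigma>' f)) / c\<^sup>2"
          unfolding sp by (simp add: sum_distrib_left)
        finally show "pB f * (L f)\<^sup>2 = (\<Sum>\<sigma>\<in>I. \<Sum>\<sigma>'\<in>I. pB f * (a \<sigma> f * a \<sigma>' f)) / c\<^sup>2" .
      qed
      also have "\<dots> = (\<Sum>\<sigma>\<in>I. \<Sum>\<sigma>'\<in>I. \<Sum>f\<in>Omf n. pB f * (a \<sigma> f * a \<sigma>' f)) / c\<^sup>2"
        by (simp add: sum_divide_distrib[symmetric] sum.swap[of _ "Omf n"])
      also have "\<dots> = (\<Sum>\<sigma>\<in>I. \<Sum>\<sigma>'\<in>I. (1 / q) ^ card (S \<sigma> \<inter> S \<sigma>')) / c\<^sup>2"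
        using saa by simp
      finally show ?thesis .
    qed
    have "(\<Sum>f\<in>Omf n. pB f * (L f - 1)\<^sup>2)
        = (\<Sum>f\<in>Omf n. pB f * (L f)\<^sup>2) - 2 * (\<Sum>f\<in>Omf n. pB f * L f) + (\<Sum>f\<in>Omf n. pB f)"
      by (simp add: power2_diff algebra_simps sum.distrib sum_subtractf sum_distrib_left)
    then show ?thesis using s1 sL sL2 by simp
  qed
  finally show ?thesis using P1 P0 by (simp add: c_def)
qed

lemma pow_sum_subsets:
  fixes y :: real
  assumes "finite M"
  shows "(\<Sum>F\<in>Pow M. y ^ card F) = (1 + y) ^ card M"
  using assms
proof (induction M rule: finite_induct)
  case empty then show ?case by simp
next
  case (insert a M)
  have disj: "Pow M \<inter> insert a ` Pow M = {}" using insert by auto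
  have inj: "inj_on (insert a) (Pow M)" using insert by (auto simp: inj_on_def)
  have "(\<Sum>F\<in>Pow (insert a M). y ^ card F) = (\<Sum>F\<in>Pow M. y ^ card F) + (\<Sum>F\<in>insert a ` Pow M. y ^ card F)"
    unfolding Pow_insert using insert disj by (intro sum.union_disjoint) auto
  also have "(\<Sum>F\<in>insert a ` Pow M. y ^ card F) = (\<Sum>F\<in>Pow M. y ^ card (insert a F))"
    using inj by (simp add: sum.reindex)
  also have "\<dots> = (\<Sum>F\<in>Pow M. y * y ^ card F)"
  proof (intro sum.cong refl)
    fix F assume "F \<in> Pow M"
    then have "finite F" "a \<notin> F" using insert finite_subset by auto
    then show "y ^ card (insert a F) = y * y ^ card F" by simp
  qed
  finally show ?case using insert by (simp add: sum_distrib_left[symmetric] algebra_simps)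
qed

lemma count_funs:
  fixes W :: "'a set" and rk :: "'a \<Rightarrow> nat" and A :: "'a \<Rightarrow> ('a \<Rightarrow> 'b) \<Rightarrow> 'b set" and c :: "'a \<Rightarrow> nat"
  assumes finW: "finite W"
    and dep: "\<And>u \<phi> \<psi>. u \<in> W \<Longrightarrow> (\<And>v. v \<in> W \<Longrightarrow> rk v < rk u \<Longrightarrow> \<phi> v = \<psi> v) \<Longrightarrow> A u \<phi> = A u \<psi>"
    and fin: "\<And>u \<phi>. u \<in> W \<Longrightarrow> finite (A u \<phi>)"
    and cb: "\<And>u \<phi>. u \<in> W \<Longrightarrow> card (A u \<phi>) \<le> c u"
  shows "finite {\<phi> \<in> extensional W. \<forall>u\<in>W. \<phi> u \<in> A u \<phi>}
     \<and> card {\<phi> \<in> extensional W. \<forall>u\<in>W. \<phi> u \<in> A u \<phi>} \<le> (\<Prod>u\<in>W. c u)"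
proof -
  define Ph where "Ph = (\<lambda>B. {\<phi> \<in> extensional B. \<forall>u\<in>B. \<phi> u \<in> A u \<phi>})"
  have "finite (Ph W) \<and> card (Ph W) \<le> (\<Prod>u\<in>W. c u)"
  proof (rule finite_remove_induct[OF finW, where P="\<lambda>B. finite (Ph B) \<and> card (Ph B) \<le> (\<Prod>u\<in>B. c u)"])
    have "Ph {} = {\<lambda>_. undefined}" by (auto simp: Ph_def extensional_def)
    then show "finite (Ph {}) \<and> card (Ph {}) \<le> (\<Prod>u\<in>{}. c u)" by simp
  next
    fix B assume remove: "finite B" "B \<noteq> {}" "B \<subseteq> W"
      and IH0: "\<And>x. x \<in> B \<Longrightarrow> finite (Ph (B - {x})) \<and> card (Ph (B - {x})) \<le> (\<Prod>u\<in>B - {x}. c u)"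
    have finB: "finite B" using remove by auto
    define m where "m = Max (rk ` B)"
    have "m \<in> rk ` B" unfolding m_def using finB remove(2) by (intro Max_in) auto
    then obtain u where u1: "u \<in> B" "rk u = m" by auto
    have u: "u \<in> B" "\<And>v. v \<in> B \<Longrightarrow> rk v \<le> rk u"
      using u1 finB unfolding m_def by auto
    define B' where "B' = B - {u}"
    from IH0[OF u(1)] have IH: "finite (Ph B')" "card (Ph B') \<le> (\<Prod>u\<in>B'. c u)"
      by (auto simp: B'_def)
    define r :: "('a \<Rightarrow> 'b) \<Rightarrow> ('a \<Rightarrow> 'b) \<times> 'b" where "r = (\<lambda>\<phi>. (restrict \<phi> B', \<phi> u))"
    have uW: "u \<in> W" using u remove by auto
    have dep_restrict: "A u (restrict \<phi> B') = A u \<phi>" if "\<phi> \<in> extensional B" for \<phi>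
    proof (rule dep[OF uW])
      fix v assume v: "v \<in> W" "rk v < rk u"
      show "restrict \<phi> B' v = \<phi> v"
      proof (cases "v \<in> B")
        case True
        then have "v \<noteq> u" using v by auto
        with True show ?thesis by (simp add: B'_def)
      next
        case False
        then show ?thesis using that by (auto simp: B'_def extensional_def)
      qed
    qed
    have dep_restrict2: "A w (restrict \<phi> B') = A w \<phi>" if "\<phi> \<in> extensional B" "w \<in> B'" for \<phi> w
    proof (rule dep)
      show "w \<in> W" using that remove by (auto simp: B'_def)
      fix v assume v: "v \<in> W" "rk v < rk w"
      show "restrict \<phi> B' v = \<phi> v"
      proof (cases "v \<in> B")
        case True
        have "rk w \<le> rk u" using u that by (auto simp: B'_def)
        then have "v \<noteq> u" using v by auto
        with True show ?thesis by (simp add: B'_def)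
      next
        case False
        then show ?thesis using that by (auto simp: B'_def extensional_def)
      qed
    qed
    have inj: "inj_on r (Ph B)"
    proof (rule inj_onI)
      fix \<phi> \<psi> assume "\<phi> \<in> Ph B" "\<psi> \<in> Ph B" "r \<phi> = r \<psi>"
      then show "\<phi> = \<psi>"
        unfolding r_def Ph_def B'_def
        by (auto simp: fun_eq_iff extensional_def restrict_def) (metis)
    qed
    have img: "r ` Ph B \<subseteq> Sigma (Ph B') (\<lambda>\<psi>. A u \<psi>)"
    proof
      fix z assume "z \<in> r ` Ph B"
      then obtain \<phi> where \<phi>: "\<phi> \<in> Ph B" "z = r \<phi>" by auto
      have ext: "\<phi> \<in> extensional B" using \<phi> by (simp add: Ph_def)
      have "restrict \<phi> B' \<in> Ph B'"
        unfolding Ph_def using \<phi> dep_restrict2[OF ext] by (auto simp: Ph_def B'_def)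
      moreover have "\<phi> u \<in> A u (restrict \<phi> B')"
        using \<phi> u dep_restrict[OF ext] by (auto simp: Ph_def)
      ultimately show "z \<in> Sigma (Ph B') (\<lambda>\<psi>. A u \<psi>)" using \<phi> by (simp add: r_def)
    qed
    have finS: "finite (Sigma (Ph B') (\<lambda>\<psi>. A u \<psi>))"
      using IH(1) fin[OF uW] by auto
    have "card (Ph B) = card (r ` Ph B)" using inj by (simp add: card_image)
    also have "\<dots> \<le> card (Sigma (Ph B') (\<lambda>\<psi>. A u \<psi>))" using img finS by (rule card_mono[rotated])
    also have "\<dots> = (\<Sum>\<psi>\<in>Ph B'. card (A u \<psi>))" using IH(1) fin[OF uW] by (simp add: card_SigmaI)
    also have "\<dots> \<le> (\<Sum>\<psi>\<in>Ph B'. c u)" using cb[OF uW] by (intro sum_mono) auto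
    also have "\<dots> = card (Ph B') * c u" by simp
    also have "\<dots> \<le> (\<Prod>u\<in>B'. c u) * c u" using IH(2) by simp
    also have "\<dots> = (\<Prod>u\<in>B. c u)"
      using u finB by (simp add: B'_def prod.remove mult.commute)
    finally have "card (Ph B) \<le> (\<Prod>u\<in>B. c u)" .
    moreover have "finite (Ph B)"
      using finS img inj by (metis finite_imageD finite_subset)
    ultimately show "finite (Ph B) \<and> card (Ph B) \<le> (\<Prod>u\<in>B. c u)" by simp
  qed
  then show ?thesis by (simp add: Ph_def)
qed


lemma injections_subset: "injections V n \<subseteq> PiE V (\<lambda>_. {..<n})"
  by (auto simp: injections_def PiE_def Pi_def)

lemma finite_injections: "finite V \<Longrightarrow> finite (injections V n)"
  by (rule finite_subset[OF injections_subset]) (auto intro: finite_PiE)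

definition sw :: "nat \<Rightarrow> nat \<Rightarrow> nat \<Rightarrow> nat" where
  "sw b b' y = (if y = b then b' else if y = b' then b else y)"

lemma sw_inj: "sw b b' x = sw b b' y \<longleftrightarrow> x = y"
  by (auto simp: sw_def)

lemma swap_card_le:
  fixes V :: "'v set" and g :: "'v \<Rightarrow> nat"
  assumes finV: "finite V" and aV: "a \<in> V" and PV: "P \<subseteq> V"
    and b: "b \<in> {..<n} - g ` P" and b': "b' \<in> {..<n} - g ` P"
  shows "card {\<sigma> \<in> injections V n. (\<forall>p\<in>P. \<sigma> p = g p) \<and> \<sigma> a = b}
       \<le> card {\<sigma> \<in> injections V n. (\<forall>p\<in>P. \<sigma> p = g p) \<and> \<sigma> a = b'}"
proof -
  define \<tau> where "\<tau> = (\<lambda>\<sigma>::'v \<Rightarrow> nat. restrict (\<lambda>v. sw b b' (\<sigma> v)) V)"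
  let ?X = "\<lambda>b. {\<sigma> \<in> injections V n. (\<forall>p\<in>P. \<sigma> p = g p) \<and> \<sigma> a = b}"
  have inj: "inj_on \<tau> (?X b)"
  proof (rule inj_onI)
    fix \<sigma>1 \<sigma>2 assume s: "\<sigma>1 \<in> ?X b" "\<sigma>2 \<in> ?X b" "\<tau> \<sigma>1 = \<tau> \<sigma>2"
    show "\<sigma>1 = \<sigma>2"
    proof (rule extensionalityI)
      show "\<sigma>1 \<in> extensional V" "\<sigma>2 \<in> extensional V" using s by (auto simp: injections_def)
      fix v assume "v \<in> V"
      then have "sw b b' (\<sigma>1 v) = sw b b' (\<sigma>2 v)" using s(3) unfolding \<tau>_def by (metis restrict_apply')
      then show "\<sigma>1 v = \<sigma>2 v" by (simp add: sw_inj)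
    qed
  qed
  have sub: "\<tau> ` ?X b \<subseteq> ?X b'"
  proof
    fix z assume "z \<in> \<tau> ` ?X b"
    then obtain \<sigma> where \<sigma>: "\<sigma> \<in> ?X b" "z = \<tau> \<sigma>" by auto
    have inj\<sigma>: "inj_on \<sigma> V" and rng: "\<sigma> ` V \<subseteq> {..<n}" using \<sigma> by (auto simp: injections_def)
    have "z \<in> extensional V" using \<sigma> by (simp add: \<tau>_def)
    moreover have "z ` V \<subseteq> {..<n}" using rng b b' \<sigma>(2) by (auto simp: \<tau>_def sw_def)
    moreover have "inj_on z V"
      using inj\<sigma> \<sigma>(2) by (auto simp: \<tau>_def inj_on_def sw_inj)
    moreover have "\<forall>p\<in>P. z p = g p"
    proof
      fix p assume p: "p \<in> P"
      then have "\<sigma> p = g p" using \<sigma> by auto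
      moreover have "g p \<noteq> b" "g p \<noteq> b'" using b b' p by auto
      ultimately show "z p = g p" using p PV \<sigma>(2) by (auto simp: \<tau>_def sw_def)
    qed
    moreover have "z a = b'" using \<sigma> aV by (auto simp: \<tau>_def sw_def)
    ultimately show "z \<in> ?X b'" by (simp add: injections_def)
  qed
  have fin: "finite (?X b')" using finite_injections[OF finV] by auto
  show ?thesis using card_inj_on_le[OF inj sub fin] .
qed

lemma prescribed_step:
  fixes V :: "'v set" and g :: "'v \<Rightarrow> nat"
  assumes finV: "finite V" and aV: "a \<in> V" and PV: "P \<subseteq> V" and aP: "a \<notin> P" and Vn: "card V \<le> n"
  shows "real (card {\<sigma> \<in> injections V n. \<forall>p\<in>insert a P. \<sigma> p = g p}) * (real n - real (card P))
       \<le> real (card {\<sigma> \<in> injections V n. \<forall>p\<in>P. \<sigma> p = g p})"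
proof -
  define X where "X = {\<sigma> \<in> injections V n. \<forall>p\<in>P. \<sigma> p = g p}"
  define Xb where "Xb = (\<lambda>b. {\<sigma> \<in> injections V n. (\<forall>p\<in>P. \<sigma> p = g p) \<and> \<sigma> a = b})"
  define Bs where "Bs = {..<n} - g ` P"
  have finP: "finite P" using PV finV finite_subset by auto
  have finX: "finite X" using finite_injections[OF finV] by (simp add: X_def)
  have ins: "{\<sigma> \<in> injections V n. \<forall>p\<in>insert a P. \<sigma> p = g p} = Xb (g a)"
    by (auto simp: Xb_def)
  show ?thesis
  proof (cases "g a \<in> Bs")
    case False
    have "Xb (g a) = {}"
    proof (rule ccontr)
      assume "Xb (g a) \<noteq> {}"
      then obtain \<sigma> where \<sigma>: "\<sigma> \<in> injections V n" "\<forall>p\<in>P. \<sigma> p = g p" "\<sigma> a = g a"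
        by (auto simp: Xb_def)
      have "\<sigma> a < n" using \<sigma>(1) aV by (auto simp: injections_def)
      with False \<sigma>(3) have "g a \<in> g ` P" by (auto simp: Bs_def)
      then obtain p where p: "p \<in> P" "g p = g a" by auto
      then have "\<sigma> p = \<sigma> a" using \<sigma> by auto
      moreover have "inj_on \<sigma> V" using \<sigma>(1) by (simp add: injections_def)
      ultimately have "p = a" using p(1) PV aV by (auto dest: inj_onD)
      then show False using p aP by simp
    qed
    then show ?thesis unfolding ins by simp
  next
    case True
    have le: "card (Xb (g a)) \<le> card (Xb b)" if "b \<in> Bs" for b
      unfolding Xb_def using swap_card_le[OF finV aV PV, of "g a" n g b] True that by (simp add: Bs_def)
    have finBs: "finite Bs" by (simp add: Bs_def)
    have "card Bs * card (Xb (g a)) = (\<Sum>b\<in>Bs. card (Xb (g a)))" by simp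
    also have "\<dots> \<le> (\<Sum>b\<in>Bs. card (Xb b))" using le by (intro sum_mono) auto
    also have "\<dots> = card (\<Union>b\<in>Bs. Xb b)"
      using finX by (intro card_UN_disjoint[symmetric] finBs) (auto simp: Xb_def X_def intro: finite_subset[OF _ finX])
    also have "\<dots> \<le> card X" using finX by (intro card_mono) (auto simp: Xb_def X_def)
    finally have 1: "card Bs * card (Xb (g a)) \<le> card X" .
    have "n - card P \<le> card Bs"
    proof -
      have "card {..<n} - card (g ` P) \<le> card ({..<n} - g ` P)" by (rule diff_card_le_card_Diff) (use finP in auto)
      moreover have "card (g ` P) \<le> card P" using finP by (rule card_image_le)
      ultimately show ?thesis by (simp add: Bs_def)
    qed
    moreover have "card P \<le> n" using card_mono[OF finV PV] Vn by simp
    ultimately have "real n - real (card P) \<le> real (card Bs)" by linarith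
    then have "real (card (Xb (g a))) * (real n - real (card P)) \<le> real (card (Xb (g a))) * real (card Bs)"
      by (intro mult_left_mono) auto
    also have "\<dots> \<le> real (card X)" using 1 by (simp add: mult.commute of_nat_mult[symmetric] del: of_nat_mult)
    finally show ?thesis using ins by (simp add: X_def)
  qed
qed

lemma prescribed:
  fixes V :: "'v set" and g :: "'v \<Rightarrow> nat"
  assumes finV: "finite V" and Vn: "card V \<le> n" and PV: "P \<subseteq> V"
  shows "real (card {\<sigma> \<in> injections V n. \<forall>p\<in>P. \<sigma> p = g p}) * (real n - real (card V)) ^ card P
       \<le> real (card (injections V n))"
proof -
  have finP: "finite P" using PV finV finite_subset by auto
  from finP PV show ?thesis
  proof (induction P rule: finite_induct)
    case empty then show ?case by simp
  next
    case (insert a P)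
    have aV: "a \<in> V" and PV': "P \<subseteq> V" using insert by auto
    have cP: "card P \<le> card V" using card_mono[OF finV PV'] .
    have nK: "0 \<le> real n - real (card V)" using Vn by simp
    have "real (card {\<sigma> \<in> injections V n. \<forall>p\<in>insert a P. \<sigma> p = g p}) * (real n - real (card V)) ^ card (insert a P)
        = real (card {\<sigma> \<in> injections V n. \<forall>p\<in>insert a P. \<sigma> p = g p}) * (real n - real (card V)) * (real n - real (card V)) ^ card P"
      using insert by (simp add: mult.assoc)
    also have "\<dots> \<le> real (card {\<sigma> \<in> injections V n. \<forall>p\<in>insert a P. \<sigma> p = g p}) * (real n - real (card P)) * (real n - real (card V)) ^ card P"
      using cP nK by (intro mult_right_mono mult_left_mono) auto
    also have "\<dots> \<le> real (card {\<sigma> \<in> injections V n. \<forall>p\<in>P. \<sigma> p = g p}) * (real n - real (card V)) ^ card P"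
      using prescribed_step[OF finV aV PV' insert(2) Vn, of g] nK by (intro mult_right_mono) auto
    also have "\<dots> \<le> real (card (injections V n))" using insert.IH PV' by simp
    finally show ?case .
  qed
qed

lemma edge_form:
  assumes "e \<in> tree_edges D h"
  obtains w c where "e = {w, w @ [c]}" "w \<in> tree_verts D h" "w @ [c] \<in> tree_verts D h" "c < D"
  using assms by (auto simp: tree_edges_def tree_verts_def)

lemma edge_ex:
  assumes "e \<in> tree_edges D h"
  shows "\<exists>w c. e = {w, w @ [c]} \<and> c < D \<and> w \<in> tree_verts D h \<and> w @ [c] \<in> tree_verts D h"
  using assms by (auto simp: tree_edges_def tree_verts_def)

lemma edge_sub: "e \<in> tree_edges D h \<Longrightarrow> e \<subseteq> tree_verts D h"
  by (erule edge_form) auto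

lemma finite_tree_verts': "finite (tree_verts D h)"
proof -
  have "tree_verts D h = (\<Union>i\<in>{..h}. {w. set w \<subseteq> {..<D} \<and> length w = i})" by (auto simp: tree_verts_def)
  then show ?thesis by (simp add: finite_lists_length_eq)
qed


lemma finite_tree_edges: "finite (tree_edges D h)"
proof -
  have "tree_edges D h \<subseteq> Pow (tree_verts D h)" using edge_sub by blast
  then show ?thesis using finite_tree_verts'[of D h] by (simp add: finite_subset)
qed

definition nbr :: "nat \<Rightarrow> nat \<Rightarrow> nat list \<Rightarrow> nat list set" where
  "nbr D h v = {w. {v, w} \<in> tree_edges D h}"

lemma nbr_sub: "nbr D h v \<subseteq> insert (butlast v) ((\<lambda>c. v @ [c]) ` {..<D})"
proof
  fix w assume "w \<in> nbr D h v"
  then have "{v, w} \<in> tree_edges D h" by (simp add: nbr_def)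
  then obtain x c where xc: "{v, w} = {x, x @ [c]}" "c < D" using edge_ex[OF \<open>{v, w} \<in> tree_edges D h\<close>] by blast
  then have "(v = x \<and> w = x @ [c]) \<or> (v = x @ [c] \<and> w = x)" by (metis doubleton_eq_iff)
  then show "w \<in> insert (butlast v) ((\<lambda>c. v @ [c]) ` {..<D})"
  proof
    assume "v = x \<and> w = x @ [c]" then show ?thesis using xc(2) by blast
  next
    assume "v = x @ [c] \<and> w = x" then show ?thesis by simp
  qed
qed

lemma nbr_finite: "finite (nbr D h v)"
  by (rule finite_subset[OF nbr_sub]) auto

lemma nbr_card: "card (nbr D h v) \<le> D + 1"
proof -
  have "card (nbr D h v) \<le> card (insert (butlast v) ((\<lambda>c. v @ [c]) ` {..<D}))"
    by (rule card_mono[OF _ nbr_sub]) auto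
  also have "\<dots> \<le> Suc (card ((\<lambda>c. v @ [c]) ` {..<D}))" by (rule card_insert_le_m1) auto
  also have "card ((\<lambda>c. v @ [c]) ` {..<D}) \<le> D" using card_image_le[of "{..<D}" "\<lambda>c. v @ [c]"] by simp
  finally show ?thesis by simp
qed

definition Rch :: "nat list set set \<Rightarrow> nat list set" where
  "Rch F0 = {u \<in> \<Union>F0. u \<noteq> [] \<and> {butlast u, u} \<in> F0}"

lemma Rch_bij:
  assumes "F0 \<subseteq> tree_edges D h"
  shows "bij_betw (\<lambda>u. {butlast u, u}) (Rch F0) F0"
proof (rule bij_betwI')
  fix u u' assume u: "u \<in> Rch F0" "u' \<in> Rch F0"
  have ne1: "u \<noteq> []" "u' \<noteq> []" using u by (auto simp: Rch_def)
  show "({butlast u, u} = {butlast u', u'}) = (u = u')"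
  proof
    assume eq: "{butlast u, u} = {butlast u', u'}"
    show "u = u'"
    proof (rule ccontr)
      assume ne: "u \<noteq> u'"
      have "(butlast u = butlast u' \<and> u = u') \<or> (butlast u = u' \<and> u = butlast u')"
        using eq by (simp only: doubleton_eq_iff)
      with ne have "butlast u = u' \<and> u = butlast u'" by blast
      then have bu: "butlast u = u'" "u = butlast u'" by auto
      have l1: "length (butlast u) < length u" using ne1(1) by (cases u rule: rev_cases) auto
      have l2: "length (butlast u') < length u'" using ne1(2) by (cases u' rule: rev_cases) auto
      from l1[unfolded bu(1)] l2[folded bu(2)] show False by linarith
    qed
  qed simp
next
  fix u assume "u \<in> Rch F0" then show "{butlast u, u} \<in> F0" by (simp add: Rch_def)
next
  fix e assume e: "e \<in> F0"
  then have "e \<in> tree_edges D h" using assms by auto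
  then obtain w c where wc: "e = {w, w @ [c]}" using edge_ex[OF \<open>e \<in> tree_edges D h\<close>] by blast
  have "w @ [c] \<in> Rch F0" using e wc by (auto simp: Rch_def)
  moreover have "e = {butlast (w @ [c]), w @ [c]}" using wc by simp
  ultimately show "\<exists>u\<in>Rch F0. e = {butlast u, u}" by blast
qed

lemma Rch_sub: "Rch F0 \<subseteq> \<Union>F0" by (auto simp: Rch_def)

lemma card_Rch: "F0 \<subseteq> tree_edges D h \<Longrightarrow> card (Rch F0) = card F0"
  by (rule bij_betw_same_card[OF Rch_bij])

lemma W_sub: "F0 \<subseteq> tree_edges D h \<Longrightarrow> \<Union>F0 \<subseteq> tree_verts D h"
  using edge_sub by blast

lemma W_finite: "F0 \<subseteq> tree_edges D h \<Longrightarrow> finite (\<Union>F0)"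
  using finite_tree_verts'[of D h] W_sub by (rule finite_subset[rotated])

lemma W_minus_R:
  assumes "F0 \<subseteq> tree_edges D h" "F0 \<noteq> {}"
  shows "\<Union>F0 - Rch F0 \<noteq> {}"
proof -
  have fin: "finite (\<Union>F0)" using W_finite[OF assms(1)] .
  have ne: "\<Union>F0 \<noteq> {}"
  proof -
    obtain e where e: "e \<in> F0" using assms(2) by auto
    have "e \<in> tree_edges D h" using e assms(1) by auto
    then obtain w c where "e = {w, w @ [c]}" using edge_ex[OF \<open>e \<in> tree_edges D h\<close>] by blast
    then have "w \<in> \<Union>F0" using e by blast
    then show ?thesis by blast
  qed
  define m where "m = Min (length ` \<Union>F0)"
  have "m \<in> length ` \<Union>F0" unfolding m_def using fin ne by (intro Min_in) auto
  then obtain u where u: "u \<in> \<Union>F0" "length u = m" by auto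
  have umin: "length u \<le> length v" if "v \<in> \<Union>F0" for v
  proof -
    have "m \<le> length v" unfolding m_def using fin that by (intro Min_le) auto
    then show ?thesis using u(2) by simp
  qed
  have "u \<notin> Rch F0"
  proof
    assume "u \<in> Rch F0"
    then have "butlast u \<in> \<Union>F0" "u \<noteq> []" by (auto simp: Rch_def)
    then have "length u \<le> length (butlast u)" using umin by blast
    then show False using \<open>u \<noteq> []\<close> by (cases u rule: rev_cases) auto
  qed
  then show ?thesis using u by auto
qed

lemma card_tree_edges_le: "card (tree_edges D h) \<le> card (tree_verts D h)"
proof -
  have "card (tree_edges D h) = card (Rch (tree_edges D h))" using card_Rch[of "tree_edges D h" D h] by simp
  also have "\<dots> \<le> card (tree_verts D h)"
    using Rch_sub W_sub[of "tree_edges D h" D h] finite_tree_verts' by (intro card_mono) auto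
  finally show ?thesis .
qed

definition Phi :: "nat \<Rightarrow> nat \<Rightarrow> nat list set set \<Rightarrow> (nat list \<Rightarrow> nat list) set" where
  "Phi D h F0 = {\<phi> \<in> extensional (\<Union>F0). \<phi> ` \<Union>F0 \<subseteq> tree_verts D h \<and> inj_on \<phi> (\<Union>F0)
      \<and> (\<forall>e\<in>F0. \<phi> ` e \<in> tree_edges D h)}"

lemma Phi_count:
  assumes F0: "F0 \<subseteq> tree_edges D h"
  shows "finite (Phi D h F0) \<and> card (Phi D h F0)
     \<le> card (tree_verts D h) ^ (card (\<Union>F0) - card F0) * (D + 1) ^ card F0"
proof -
  define W where "W = \<Union>F0"
  define R where "R = Rch F0"
  define K where "K = card (tree_verts D h)"
  define A where "A = (\<lambda>u (\<phi>::nat list \<Rightarrow> nat list). if u \<in> R then nbr D h (\<phi> (butlast u)) else tree_verts D h)"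
  define c where "c = (\<lambda>u. if u \<in> R then D + 1 else K)"
  have finW: "finite W" using W_finite[OF F0] by (simp add: W_def)
  have RW: "R \<subseteq> W" using Rch_sub by (simp add: R_def W_def)
  have cf: "finite {\<phi> \<in> extensional W. \<forall>u\<in>W. \<phi> u \<in> A u \<phi>}
     \<and> card {\<phi> \<in> extensional W. \<forall>u\<in>W. \<phi> u \<in> A u \<phi>} \<le> (\<Prod>u\<in>W. c u)"
  proof (rule count_funs[OF finW, where rk=length])
    fix u and \<phi> \<psi> :: "nat list \<Rightarrow> nat list"
    assume u: "u \<in> W" and eq: "\<And>v. v \<in> W \<Longrightarrow> length v < length u \<Longrightarrow> \<phi> v = \<psi> v"
    show "A u \<phi> = A u \<psi>"
    proof (cases "u \<in> R")
      case True
      then have "butlast u \<in> W" "u \<noteq> []" by (auto simp: R_def Rch_def W_def)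
      then have "\<phi> (butlast u) = \<psi> (butlast u)" using eq by simp
      then show ?thesis by (simp add: A_def)
    qed (simp add: A_def)
  next
    fix u \<phi> show "finite (A u \<phi>)" by (simp add: A_def nbr_finite finite_tree_verts')
  next
    fix u \<phi> show "card (A u \<phi>) \<le> c u" using nbr_card[of D h] by (simp add: A_def c_def K_def)
  qed
  have sub: "Phi D h F0 \<subseteq> {\<phi> \<in> extensional W. \<forall>u\<in>W. \<phi> u \<in> A u \<phi>}"
  proof
    fix \<phi> assume \<phi>: "\<phi> \<in> Phi D h F0"
    have "\<phi> u \<in> A u \<phi>" if u: "u \<in> W" for u
    proof (cases "u \<in> R")
      case True
      then have "{butlast u, u} \<in> F0" by (simp add: R_def Rch_def)
      then have "\<phi> ` {butlast u, u} \<in> tree_edges D h" using \<phi> unfolding Phi_def by blast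
      then have "\<phi> u \<in> nbr D h (\<phi> (butlast u))" by (simp add: nbr_def)
      then show ?thesis using True by (simp add: A_def)
    next
      case False
      then show ?thesis using \<phi> u by (auto simp: A_def Phi_def W_def)
    qed
    moreover have "\<phi> \<in> extensional W" using \<phi> by (simp add: Phi_def W_def)
    ultimately show "\<phi> \<in> {\<phi> \<in> extensional W. \<forall>u\<in>W. \<phi> u \<in> A u \<phi>}" by blast
  qed
  have "(\<Prod>u\<in>W. c u) = (D + 1) ^ card R * K ^ card (W - R)"
  proof -
    have "(\<Prod>u\<in>W. c u) = (\<Prod>u\<in>W \<inter> {u. u \<in> R}. D + 1) * (\<Prod>u\<in>W \<inter> - {u. u \<in> R}. K)"
      unfolding c_def using finW by (rule prod.If_cases)
    also have "W \<inter> {u. u \<in> R} = R" using RW by auto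
    also have "W \<inter> - {u. u \<in> R} = W - R" by auto
    finally show ?thesis by simp
  qed
  also have "card R = card F0" using card_Rch[OF F0] by (simp add: R_def)
  also have "card (W - R) = card W - card F0"
    using card_Diff_subset[OF finite_subset[OF RW finW] RW] card_Rch[OF F0] by (simp add: R_def)
  finally have "(\<Prod>u\<in>W. c u) = K ^ (card W - card F0) * (D + 1) ^ card F0" by simp
  moreover have "card (Phi D h F0) \<le> card {\<phi> \<in> extensional W. \<forall>u\<in>W. \<phi> u \<in> A u \<phi>}"
    using cf sub by (intro card_mono) auto
  moreover have "finite (Phi D h F0)" using cf sub by (blast intro: finite_subset)
  ultimately show ?thesis using cf by (simp add: K_def W_def)
qed

lemma inj_img_TE:
  assumes "\<sigma> \<in> injections (tree_verts D h) n"
  shows "inj_on (\<lambda>e. \<sigma> ` e) (tree_edges D h)"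
proof (rule inj_onI)
  fix e1 e2 assume e: "e1 \<in> tree_edges D h" "e2 \<in> tree_edges D h" "\<sigma> ` e1 = \<sigma> ` e2"
  have inj: "inj_on \<sigma> (tree_verts D h)" using assms by (simp add: injections_def)
  show "e1 = e2" using inj_on_image_eq_iff[OF inj edge_sub[OF e(1)] edge_sub[OF e(2)]] e(3) by simp
qed

lemma N_bound:
  fixes \<sigma> :: "nat list \<Rightarrow> nat"
  assumes \<sigma>: "\<sigma> \<in> injections (tree_verts D h) n" and F0: "F0 \<subseteq> tree_edges D h"
    and Kn: "card (tree_verts D h) \<le> n"
  shows "real (card {\<sigma>' \<in> injections (tree_verts D h) n. (\<lambda>e. \<sigma> ` e) ` F0 \<subseteq> (\<lambda>e. \<sigma>' ` e) ` tree_edges D h})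
          * (real n - real (card (tree_verts D h))) ^ card (\<Union>F0)
       \<le> real (card (Phi D h F0)) * real (card (injections (tree_verts D h) n))"
proof -
  define TV where "TV = tree_verts D h"
  define TE where "TE = tree_edges D h"
  define I where "I = injections TV n"
  define W where "W = \<Union>F0"
  define Y where "Y = (\<lambda>\<phi>. {\<sigma>' \<in> I. \<forall>u\<in>W. \<sigma>' (\<phi> u) = \<sigma> u})"
  define c where "c = real n - real (card TV)"
  have c0: "c \<ge> 0" using Kn by (simp add: c_def TV_def)
  have finTV: "finite TV" by (simp add: TV_def finite_tree_verts')
  have finI: "finite I" by (simp add: I_def finite_injections finTV)
  have WTV: "W \<subseteq> TV" using W_sub[OF F0] by (simp add: W_def TV_def)
  have inj\<sigma>: "inj_on \<sigma> TV" using \<sigma> by (simp add: injections_def TV_def)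
  obtain finPhi: "finite (Phi D h F0)" using Phi_count[OF F0] by blast
  have cover: "{\<sigma>' \<in> I. (\<lambda>e. \<sigma> ` e) ` F0 \<subseteq> (\<lambda>e. \<sigma>' ` e) ` TE} \<subseteq> (\<Union>\<phi>\<in>Phi D h F0. Y \<phi>)"
  proof
    fix \<sigma>' assume s: "\<sigma>' \<in> {\<sigma>' \<in> I. (\<lambda>e. \<sigma> ` e) ` F0 \<subseteq> (\<lambda>e. \<sigma>' ` e) ` TE}"
    then have s1: "\<sigma>' \<in> I" and s2: "(\<lambda>e. \<sigma> ` e) ` F0 \<subseteq> (\<lambda>e. \<sigma>' ` e) ` TE" by auto
    have inj': "inj_on \<sigma>' TV" using s1 by (simp add: I_def injections_def)
    have match: "\<exists>e'\<in>TE. \<sigma> ` e = \<sigma>' ` e'" if "e \<in> F0" for e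
    proof -
      have "\<sigma> ` e \<in> (\<lambda>e. \<sigma>' ` e) ` TE" using s2 that by blast
      then show ?thesis by blast
    qed
    have inrange: "\<sigma> u \<in> \<sigma>' ` TV" if uW: "u \<in> W" for u
    proof -
      obtain e where e: "e \<in> F0" "u \<in> e" using uW by (auto simp: W_def)
      obtain e' where e': "e' \<in> TE" "\<sigma> ` e = \<sigma>' ` e'" using match[OF e(1)] by blast
      have "\<sigma> u \<in> \<sigma>' ` e'" using e(2) e'(2) by blast
      moreover have "e' \<subseteq> TV" using edge_sub e'(1) by (simp add: TE_def TV_def)
      ultimately show ?thesis by blast
    qed
    define \<phi> where "\<phi> = restrict (\<lambda>u. inv_into TV \<sigma>' (\<sigma> u)) W"
    have \<phi>1: "\<phi> u \<in> TV" "\<sigma>' (\<phi> u) = \<sigma> u" if "u \<in> W" for u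
      using inrange[OF that] that by (auto simp: \<phi>_def inv_into_into f_inv_into_f)
    have "\<phi> \<in> Phi D h F0"
      unfolding Phi_def
    proof (intro CollectI conjI)
      show "\<phi> \<in> extensional (\<Union>F0)" by (simp add: \<phi>_def W_def)
      show "\<phi> ` \<Union>F0 \<subseteq> tree_verts D h" using \<phi>1 by (auto simp: W_def TV_def)
      show "inj_on \<phi> (\<Union>F0)"
      proof (rule inj_onI)
        fix u1 u2 assume u: "u1 \<in> \<Union>F0" "u2 \<in> \<Union>F0" "\<phi> u1 = \<phi> u2"
        then have "\<sigma> u1 = \<sigma> u2" using \<phi>1[of u1] \<phi>1[of u2] by (simp add: W_def)
        then show "u1 = u2" using inj\<sigma> WTV u by (auto simp: W_def dest: inj_onD)
      qed
      show "\<forall>e\<in>F0. \<phi> ` e \<in> tree_edges D h"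
      proof
        fix e assume e: "e \<in> F0"
        obtain e' where e': "e' \<in> TE" "\<sigma> ` e = \<sigma>' ` e'" using match[OF e] by blast
        have eW: "e \<subseteq> W" using e by (auto simp: W_def)
        have "\<phi> ` e = inv_into TV \<sigma>' ` \<sigma> ` e" using eW by (auto simp: \<phi>_def)
        also have "\<dots> = inv_into TV \<sigma>' ` \<sigma>' ` e'" using e'(2) by simp
        also have "\<dots> = e'" using inj' edge_sub e'(1) by (intro inv_into_image_cancel) (auto simp: TE_def TV_def)
        finally show "\<phi> ` e \<in> tree_edges D h" using e'(1) by (simp add: TE_def)
      qed
    qed
    moreover have "\<sigma>' \<in> Y \<phi>" using s1 \<phi>1 by (simp add: Y_def)
    ultimately show "\<sigma>' \<in> (\<Union>\<phi>\<in>Phi D h F0. Y \<phi>)" by blast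
  qed
  have Ybound: "real (card (Y \<phi>)) * c ^ card W \<le> real (card I)" if \<phi>: "\<phi> \<in> Phi D h F0" for \<phi>
  proof -
    have injphi: "inj_on \<phi> W" and phiW: "\<phi> ` W \<subseteq> TV" using \<phi> by (auto simp: Phi_def W_def TV_def)
    define g where "g = (\<lambda>p. \<sigma> (the_inv_into W \<phi> p))"
    have "Y \<phi> = {\<sigma>' \<in> I. \<forall>p\<in>\<phi> ` W. \<sigma>' p = g p}"
      using injphi by (auto simp: Y_def g_def the_inv_into_f_f)
    moreover have "card (\<phi> ` W) = card W" using injphi by (rule card_image)
    ultimately show ?thesis
      using prescribed[OF finTV Kn[folded TV_def] phiW, of g] by (simp add: I_def c_def)
  qed
  have "real (card {\<sigma>' \<in> I. (\<lambda>e. \<sigma> ` e) ` F0 \<subseteq> (\<lambda>e. \<sigma>' ` e) ` TE}) * c ^ card W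
      \<le> real (card (\<Union>\<phi>\<in>Phi D h F0. Y \<phi>)) * c ^ card W"
  proof -
    have "card {\<sigma>' \<in> I. (\<lambda>e. \<sigma> ` e) ` F0 \<subseteq> (\<lambda>e. \<sigma>' ` e) ` TE} \<le> card (\<Union>\<phi>\<in>Phi D h F0. Y \<phi>)"
      using cover finPhi finI by (intro card_mono) (auto simp: Y_def)
    then show ?thesis using c0 by (intro mult_right_mono) auto
  qed
  also have "\<dots> \<le> (\<Sum>\<phi>\<in>Phi D h F0. real (card (Y \<phi>))) * c ^ card W"
  proof -
    have "card (\<Union>\<phi>\<in>Phi D h F0. Y \<phi>) \<le> (\<Sum>\<phi>\<in>Phi D h F0. card (Y \<phi>))" by (rule card_UN_le[OF finPhi])
    then have "real (card (\<Union>\<phi>\<in>Phi D h F0. Y \<phi>)) \<le> (\<Sum>\<phi>\<in>Phi D h F0. real (card (Y \<phi>)))"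
      by (simp flip: of_nat_sum)
    then show ?thesis using c0 by (intro mult_right_mono) auto
  qed
  also have "\<dots> = (\<Sum>\<phi>\<in>Phi D h F0. real (card (Y \<phi>)) * c ^ card W)" by (simp add: sum_distrib_right)
  also have "\<dots> \<le> (\<Sum>\<phi>\<in>Phi D h F0. real (card I))" using Ybound by (intro sum_mono) auto
  also have "\<dots> = real (card (Phi D h F0)) * real (card I)" by simp
  finally show ?thesis by (simp add: I_def TV_def TE_def W_def c_def)
qed

lemma term_bound:
  fixes y c K Dp Bm w m Phi N I :: real and j m' :: nat
  assumes "0 \<le> y" "0 < c" "0 \<le> K" "0 \<le> Dp" "0 \<le> N" "0 \<le> I"
    and "N * c ^ (j + m') \<le> Phi * I" and "Phi \<le> K ^ j * Dp ^ m'"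
    and "j \<ge> 1" and "K / c \<le> 1" and "Dp * y / c \<le> Bm"
  shows "y ^ m' * N \<le> I * ((K / c) * Bm ^ m')"
proof -
  have cp: "0 < c ^ (j + m')" using assms by simp
  have "N \<le> Phi * I / c ^ (j + m')" using assms(7) cp by (simp add: pos_le_divide_eq)
  also have "\<dots> \<le> K ^ j * Dp ^ m' * I / c ^ (j + m')"
    using assms cp by (intro divide_right_mono mult_right_mono) auto
  finally have N1: "N \<le> K ^ j * Dp ^ m' * I / c ^ (j + m')" .
  have "y ^ m' * N \<le> y ^ m' * (K ^ j * Dp ^ m' * I / c ^ (j + m'))"
    using N1 assms by (intro mult_left_mono) auto
  also have "\<dots> = I * ((K / c) ^ j * (Dp * y / c) ^ m')"
    using assms by (simp add: power_add power_divide power_mult_distrib field_simps)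
  also have "\<dots> \<le> I * ((K / c) * Bm ^ m')"
  proof -
    have "(K / c) ^ j \<le> (K / c) ^ 1" using assms by (intro power_decreasing) auto
    moreover have "(Dp * y / c) ^ m' \<le> Bm ^ m'" using assms by (intro power_mono) auto
    ultimately show ?thesis using assms by (intro mult_left_mono mult_mono) auto
  qed
  finally show ?thesis .
qed


lemma S_finite: "finite ((\<lambda>e. \<sigma> ` e) ` tree_edges D h)"
  using finite_tree_edges by simp

lemma card_S_le: "card ((\<lambda>e. \<sigma> ` e) ` tree_edges D h) \<le> card (tree_verts D h)"
  using card_image_le[OF finite_tree_edges, of "\<lambda>e. \<sigma> ` e" D h] card_tree_edges_le[of D h] by linarith

lemma overlap_sum:
  fixes \<sigma> :: "nat list \<Rightarrow> nat" and lam :: real and D h n :: nat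
  defines "K \<equiv> card (tree_verts D h)"
  defines "I \<equiv> injections (tree_verts D h) n"
  defines "S \<equiv> (\<lambda>\<sigma>::nat list \<Rightarrow> nat. (\<lambda>e. \<sigma> ` e) ` tree_edges D h)"
  defines "Bm \<equiv> max 1 (2 * (real D + 1) / lam)"
  assumes \<sigma>: "\<sigma> \<in> I" and lam: "lam > 0" and Kn: "2 * K \<le> n" and nl: "lam \<le> real n"
  shows "(\<Sum>\<sigma>'\<in>I. (real n / lam) ^ card (S \<sigma> \<inter> S \<sigma>'))
     \<le> real (card I) * (1 + 2 * real K / real n * (2 * Bm) ^ K)"
proof -
  define x where "x = real n / lam"
  define y where "y = x - 1"
  have n0: "real n > 0" using lam nl by simp
  have x1: "x \<ge> 1" using nl lam by (simp add: x_def)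
  have y0: "y \<ge> 0" using x1 by (simp add: y_def)
  have Bm1: "Bm \<ge> 1" by (simp add: Bm_def)
  have finI: "finite I" by (simp add: I_def finite_injections finite_tree_verts')
  have finS: "finite (S \<tau>)" for \<tau> by (simp add: S_def S_finite)
  define N where "N = (\<lambda>F. card {\<sigma>' \<in> I. F \<subseteq> S \<sigma>'})"
  have step_a: "x ^ card (S \<sigma> \<inter> S \<sigma>') = (\<Sum>F\<in>Pow (S \<sigma> \<inter> S \<sigma>'). y ^ card F)" for \<sigma>'
    using pow_sum_subsets[of "S \<sigma> \<inter> S \<sigma>'" y] finS by (simp add: y_def)
  have step_b: "(\<Sum>\<sigma>'\<in>I. \<Sum>F\<in>Pow (S \<sigma> \<inter> S \<sigma>'). y ^ card F) = (\<Sum>F\<in>Pow (S \<sigma>). y ^ card F * real (N F))"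
  proof -
    have "(\<Sum>\<sigma>'\<in>I. \<Sum>F\<in>Pow (S \<sigma> \<inter> S \<sigma>'). y ^ card F)
        = (\<Sum>\<sigma>'\<in>I. \<Sum>F\<in>Pow (S \<sigma>). if F \<subseteq> S \<sigma>' then y ^ card F else 0)"
    proof (rule sum.cong[OF refl])
      fix \<sigma>' assume "\<sigma>' \<in> I"
      have eq: "Pow (S \<sigma> \<inter> S \<sigma>') = {F \<in> Pow (S \<sigma>). F \<subseteq> S \<sigma>'}" by auto
      have "(\<Sum>F\<in>Pow (S \<sigma> \<inter> S \<sigma>'). y ^ card F) = (\<Sum>F\<in>{F \<in> Pow (S \<sigma>). F \<subseteq> S \<sigma>'}. y ^ card F)"
        by (simp only: eq)
      also have "\<dots> = (\<Sum>F\<in>Pow (S \<sigma>). if F \<subseteq> S \<sigma>' then y ^ card F else 0)"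
        by (rule sum.inter_filter) (simp add: finS)
      finally show "(\<Sum>F\<in>Pow (S \<sigma> \<inter> S \<sigma>'). y ^ card F) = (\<Sum>F\<in>Pow (S \<sigma>). if F \<subseteq> S \<sigma>' then y ^ card F else 0)" .
    qed
    also have "\<dots> = (\<Sum>F\<in>Pow (S \<sigma>). \<Sum>\<sigma>'\<in>I. if F \<subseteq> S \<sigma>' then y ^ card F else 0)"
      by (rule sum.swap)
    also have "\<dots> = (\<Sum>F\<in>Pow (S \<sigma>). y ^ card F * real (N F))"
    proof (intro sum.cong refl)
      fix F
      have "(\<Sum>\<sigma>'\<in>I. if F \<subseteq> S \<sigma>' then y ^ card F else 0) = (\<Sum>\<sigma>'\<in>{\<sigma>' \<in> I. F \<subseteq> S \<sigma>'}. y ^ card F)"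
        using finI by (intro sum.inter_filter[symmetric])
      then show "(\<Sum>\<sigma>'\<in>I. if F \<subseteq> S \<sigma>' then y ^ card F else 0) = y ^ card F * real (N F)"
        by (simp add: N_def)
    qed
    finally show ?thesis .
  qed
  have step_d: "y ^ card F * real (N F) \<le> real (card I) * (2 * real K / real n * Bm ^ K)"
    if F: "F \<in> Pow (S \<sigma>) - {{}}" for F
  proof -
    define F0 where "F0 = {e \<in> tree_edges D h. \<sigma> ` e \<in> F}"
    have F0TE: "F0 \<subseteq> tree_edges D h" by (auto simp: F0_def)
    have imgF0: "(\<lambda>e. \<sigma> ` e) ` F0 = F" using F by (auto simp: F0_def S_def)
    have injimg: "inj_on (\<lambda>e. \<sigma> ` e) F0" using inj_img_TE[of \<sigma> D h n] \<sigma> F0TE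
      by (auto simp: I_def intro: inj_on_subset)
    have cF: "card F = card F0" using card_image[OF injimg] imgF0 by simp
    have F0ne: "F0 \<noteq> {}" using imgF0 F by auto
    define W where "W = \<Union>F0"
    define m where "m = card F0"
    define j where "j = card W - m"
    have finW: "finite W" using W_finite[OF F0TE] by (simp add: W_def)
    have RW: "Rch F0 \<subseteq> W" using Rch_sub by (simp add: W_def)
    have cardW: "card W = card (Rch F0) + card (W - Rch F0)"
      using card_Diff_subset[OF finite_subset[OF RW finW] RW] card_mono[OF finW RW] by simp
    have j1: "j \<ge> 1"
    proof -
      have "W - Rch F0 \<noteq> {}" using W_minus_R[OF F0TE F0ne] by (simp add: W_def)
      then have "card (W - Rch F0) \<ge> 1" using finW by (simp add: Suc_le_eq card_gt_0_iff)
      then show ?thesis using cardW card_Rch[OF F0TE] by (simp add: j_def m_def)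
    qed
    have wjm: "card W = j + m" using j1 by (simp add: j_def)
    have KV: "card (tree_verts D h) \<le> n" using Kn by (simp add: K_def)
    have Nb: "real (N F) * (real n - real K) ^ (j + m) \<le> real (card (Phi D h F0)) * real (card I)"
      using N_bound[OF \<sigma>[unfolded I_def] F0TE KV] unfolding N_def S_def I_def K_def
      by (simp add: imgF0 wjm[unfolded W_def])
    have Pb: "real (card (Phi D h F0)) \<le> real K ^ j * (real D + 1) ^ m"
    proof -
      have "card (Phi D h F0) \<le> K ^ j * (D + 1) ^ m"
        using Phi_count[OF F0TE] by (simp add: K_def W_def j_def m_def)
      then have "real (card (Phi D h F0)) \<le> real (K ^ j * (D + 1) ^ m)" by (rule of_nat_mono)
      then show ?thesis by (simp add: add.commute)
    qed
    define c where "c = real n - real K"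
    have c2: "c \<ge> real n / 2" using Kn by (simp add: c_def)
    have c0: "c > 0" using c2 n0 by linarith
    have Kc: "real K / c \<le> 1" using c0 Kn by (simp add: c_def divide_le_eq)
    have Kc2: "real K / c \<le> 2 * real K / real n"
    proof -
      have "real K / c \<le> real K / (real n / 2)" using c2 n0 by (intro frac_le) auto
      also have "\<dots> = 2 * real K / real n" by simp
      finally show ?thesis .
    qed
    have Dyc: "(real D + 1) * y / c \<le> Bm"
    proof -
      have "y \<le> real n / lam" using lam by (simp add: y_def x_def)
      then have "(real D + 1) * y / c \<le> (real D + 1) * (real n / lam) / (real n / 2)"
        using c2 y0 n0 lam by (intro frac_le mult_left_mono) auto
      also have "\<dots> = 2 * (real D + 1) / lam" using n0 lam by (simp add: field_simps)
      also have "\<dots> \<le> Bm" by (simp add: Bm_def)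
      finally show ?thesis .
    qed
    have "y ^ m * real (N F) \<le> real (card I) * ((real K / c) * Bm ^ m)"
      by (rule term_bound[OF y0 c0 _ _ _ _ Nb[folded c_def] Pb j1 Kc Dyc]) auto
    also have "\<dots> \<le> real (card I) * (2 * real K / real n * Bm ^ K)"
    proof -
      have "m \<le> K"
      proof -
        have "m \<le> card (tree_edges D h)" unfolding m_def using F0TE finite_tree_edges by (rule card_mono[rotated])
        then show ?thesis using card_tree_edges_le[of D h] by (simp add: K_def)
      qed
      then have "Bm ^ m \<le> Bm ^ K" using Bm1 by (intro power_increasing) auto
      then show ?thesis using Kc2 Bm1 c0 by (intro mult_left_mono mult_mono) auto
    qed
    finally show ?thesis by (simp add: cF m_def)
  qed
  have "(\<Sum>\<sigma>'\<in>I. x ^ card (S \<sigma> \<inter> S \<sigma>')) = (\<Sum>F\<in>Pow (S \<sigma>). y ^ card F * real (N F))"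
    using step_a step_b by simp
  also have "\<dots> = y ^ card ({}::nat set set) * real (N {}) + (\<Sum>F\<in>Pow (S \<sigma>) - {{}}. y ^ card F * real (N F))"
    using finS by (subst sum.remove[of _ "{}"]) auto
  also have "\<dots> \<le> real (card I) + (\<Sum>F\<in>Pow (S \<sigma>) - {{}}. real (card I) * (2 * real K / real n * Bm ^ K))"
    using step_d by (intro add_mono sum_mono) (auto simp: N_def)
  also have "\<dots> \<le> real (card I) + 2 ^ K * (real (card I) * (2 * real K / real n * Bm ^ K))"
  proof -
    have "card (Pow (S \<sigma>) - {{}}) \<le> card (Pow (S \<sigma>))" using finS by (intro card_mono) auto
    also have "\<dots> = 2 ^ card (S \<sigma>)" using finS by (simp add: card_Pow)
    also have "\<dots> \<le> 2 ^ K" using card_S_le[of \<sigma> D h] by (simp add: S_def K_def)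
    finally have cb: "real (card (Pow (S \<sigma>) - {{}})) \<le> 2 ^ K" by (metis of_nat_le_iff of_nat_numeral of_nat_power)
    define C where "C = real (card I) * (2 * real K / real n * Bm ^ K)"
    have C0: "0 \<le> C" using Bm1 by (simp add: C_def)
    have s: "(\<Sum>F\<in>Pow (S \<sigma>) - {{}}. C) = real (card (Pow (S \<sigma>) - {{}})) * C" by simp
    have "real (card (Pow (S \<sigma>) - {{}})) * C \<le> 2 ^ K * C" by (rule mult_right_mono[OF cb C0])
    then show ?thesis unfolding C_def[symmetric] s by (rule add_left_mono)
  qed
  also have "\<dots> = real (card I) * (1 + 2 * real K / real n * (2 * Bm) ^ K)"
    by (simp add: power_mult_distrib algebra_simps)
  finally show ?thesis by (simp add: x_def)
qed

lemma injections_nonempty: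
  assumes "finite V" "card V \<le> n"
  shows "injections V n \<noteq> {}"
proof -
  obtain f where f: "bij_betw f V {0..<card V}" using ex_bij_betw_finite_nat[OF assms(1)] by blast
  have "restrict f V \<in> injections V n"
    using f assms(2) by (auto simp: injections_def bij_betw_def inj_on_def)
  then show ?thesis by blast
qed

lemma S_pairs:
  assumes "\<sigma> \<in> injections (tree_verts D h) n"
  shows "(\<lambda>e. \<sigma> ` e) ` tree_edges D h \<subseteq> pairs n"
proof
  fix z assume "z \<in> (\<lambda>e. \<sigma> ` e) ` tree_edges D h"
  then obtain e where e: "e \<in> tree_edges D h" "z = \<sigma> ` e" by auto
  obtain w c where wc: "e = {w, w @ [c]}" "w \<in> tree_verts D h" "w @ [c] \<in> tree_verts D h"
    using edge_ex[OF e(1)] by blast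
  have inj: "inj_on \<sigma> (tree_verts D h)" and rng: "\<sigma> ` tree_verts D h \<subseteq> {..<n}"
    using assms by (auto simp: injections_def)
  have ne: "\<sigma> w \<noteq> \<sigma> (w @ [c])" using inj wc by (auto dest: inj_onD)
  have lt: "\<sigma> w < n" "\<sigma> (w @ [c]) < n" using rng wc by auto
  have z: "z = {\<sigma> w, \<sigma> (w @ [c])}" using e wc by auto
  show "z \<in> pairs n"
  proof (cases "\<sigma> w < \<sigma> (w @ [c])")
    case True
    then show ?thesis using z lt unfolding pairs_def by blast
  next
    case False
    then have "\<sigma> (w @ [c]) < \<sigma> w" using ne by simp
    then show ?thesis using z lt unfolding pairs_def by (auto simp: insert_commute)
  qed
qed

lemma tv_bound_n:
  fixes lam :: real and D h n :: nat and A :: "nat set set set"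
  defines "K \<equiv> card (tree_verts D h)"
  defines "Bm \<equiv> max 1 (2 * (real D + 1) / lam)"
  assumes lam: "lam > 0" and Kn: "2 * K \<le> n" and nl: "lam \<le> real n"
  shows "\<bar>measure_pmf.prob (P1 lam D h n) A - measure_pmf.prob (P0 lam n) A\<bar>
     \<le> sqrt (2 * real K / real n * (2 * Bm) ^ K)"
proof -
  define I where "I = injections (tree_verts D h) n"
  define S where "S = (\<lambda>\<sigma>::nat list \<Rightarrow> nat. (\<lambda>e. \<sigma> ` e) ` tree_edges D h)"
  define q where "q = lam / real n"
  define \<epsilon> where "\<epsilon> = 2 * real K / real n * (2 * Bm) ^ K"
  have n0: "real n > 0" using lam nl by simp
  have q: "0 < q" "q \<le> 1" using lam nl n0 by (auto simp: q_def)
  have finI: "finite I" by (simp add: I_def finite_injections finite_tree_verts')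
  have neI: "I \<noteq> {}" unfolding I_def using Kn by (intro injections_nonempty finite_tree_verts') (simp add: K_def)
  have SP: "\<And>\<sigma>. \<sigma> \<in> I \<Longrightarrow> S \<sigma> \<subseteq> pairs n" unfolding S_def I_def by (rule S_pairs)
  have iq: "1 / q = real n / lam" by (simp add: q_def)
  have c0: "real (card I) > 0" using finI neI by (simp add: card_gt_0_iff)
  have "(\<Sum>\<sigma>\<in>I. \<Sum>\<sigma>'\<in>I. (1 / q) ^ card (S \<sigma> \<inter> S \<sigma>')) \<le> (\<Sum>\<sigma>\<in>I. real (card I) * (1 + \<epsilon>))"
    unfolding iq using overlap_sum[OF _ lam _ nl, of _ D h] Kn
    by (intro sum_mono) (simp add: I_def S_def K_def Bm_def \<epsilon>_def)
  also have "\<dots> = (real (card I))\<^sup>2 * (1 + \<epsilon>)" by (simp add: power2_eq_square)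
  finally have "(\<Sum>\<sigma>\<in>I. \<Sum>\<sigma>'\<in>I. (1 / q) ^ card (S \<sigma> \<inter> S \<sigma>')) / (real (card I))\<^sup>2 - 1 \<le> \<epsilon>"
    using c0 by (simp add: divide_le_eq algebra_simps)
  then have F1: "sqrt ((\<Sum>\<sigma>\<in>I. \<Sum>\<sigma>'\<in>I. (1 / q) ^ card (S \<sigma> \<inter> S \<sigma>')) / (real (card I))\<^sup>2 - 1) \<le> sqrt \<epsilon>"
    by (rule real_sqrt_le_mono)
  have F2: "\<bar>measure_pmf.prob (P1 lam D h n) A - measure_pmf.prob (P0 lam n) A\<bar>
      \<le> sqrt ((\<Sum>\<sigma>\<in>I. \<Sum>\<sigma>'\<in>I. (1 / q) ^ card (S \<sigma> \<inter> S \<sigma>')) / (real (card I))\<^sup>2 - 1)"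
    unfolding P1_def P0_def q_def[symmetric] using tv_generic[OF finI neI SP q, where A=A]
    by (simp add: I_def S_def)
  from order_trans[OF F2 F1] show ?thesis by (simp only: \<epsilon>_def)
qed


theorem theorem10:
  fixes D :: nat and lam :: real and h :: "nat \<Rightarrow> nat"
  assumes "D > 1"
    and "0 < lam" and "lam < lambda_crit D"
    and "\<forall>\<^sub>F n in sequentially.
           real (h n) \<le> real (h_low D lam n) - ln (real (h_low D lam n)) / ln (real D)
                          + ln (1 - 1 / real D) / ln (real D)"
  shows "((\<lambda>n. tv_dist (P1 lam D (h n) n) (P0 lam n)) \<longlonglongrightarrow> 0)
         \<and> (\<forall>T :: nat \<Rightarrow> nat set set \<Rightarrow> bool.
           (\<lambda>n. measure_pmf.prob (P1 lam D (h n) n) {G. T n G}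
              - measure_pmf.prob (P0 lam n) {G. T n G}) \<longlonglongrightarrow> 0)"
proof -
  note D = assms(1) and lam = assms(2) and hyp = assms(4)
  define K where "K = (\<lambda>n. card (tree_verts D (h n)))"
  define Bm where "Bm = max 1 (2 * (real D + 1) / lam)"
  define M where "M = 2 * Bm"
  have M1: "M \<ge> 1" by (simp add: M_def Bm_def)
  have lim: "(\<lambda>n. real (K n) * M ^ K n / real n) \<longlonglongrightarrow> 0"
    unfolding K_def by (rule K_asymp[OF D lam M1 hyp])
  define g where "g = (\<lambda>n. sqrt (2 * (real (K n) * M ^ K n / real n)))"
  have g: "g \<longlonglongrightarrow> 0"
  proof -
    have "(\<lambda>n. 2 * (real (K n) * M ^ K n / real n)) \<longlonglongrightarrow> 0" by (rule tendsto_mult_right_zero[OF lim])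
    from tendsto_real_sqrt[OF this] show ?thesis by (simp add: g_def)
  qed
  have e1: "\<forall>\<^sub>F n in sequentially. real (K n) * M ^ K n / real n < 1 / 2"
    using order_tendstoD(2)[OF lim, of "1 / 2"] by simp
  have ev: "\<forall>\<^sub>F n in sequentially. 2 * K n \<le> n \<and> lam \<le> real n"
    using e1 eventually_ge_at_top[of "nat \<lceil>lam\<rceil> + 1"]
  proof eventually_elim
    case (elim n)
    have n0: "real n > 0" using elim(2) by simp
    have "1 \<le> M ^ K n" using M1 by (rule one_le_power)
    then have "real (K n) * 1 \<le> real (K n) * M ^ K n" by (intro mult_left_mono) auto
    then have "real (K n) / real n < 1 / 2" using elim(1) n0 by (smt (verit) divide_right_mono)
    then have "2 * real (K n) < real n" using n0 by (simp add: field_simps)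
    moreover have "lam \<le> real n" using elim(2) by linarith
    ultimately show ?case by simp
  qed
  have bound: "\<forall>\<^sub>F n in sequentially. \<forall>A. \<bar>measure_pmf.prob (P1 lam D (h n) n) A - measure_pmf.prob (P0 lam n) A\<bar> \<le> g n"
    using ev
  proof eventually_elim
    case (elim n)
    show ?case
    proof
      fix A
      have "\<bar>measure_pmf.prob (P1 lam D (h n) n) A - measure_pmf.prob (P0 lam n) A\<bar>
          \<le> sqrt (2 * real (K n) / real n * (2 * Bm) ^ K n)"
        using tv_bound_n[OF lam, of D "h n" n A] elim by (simp add: K_def Bm_def)
      also have "2 * real (K n) / real n * (2 * Bm) ^ K n = 2 * (real (K n) * M ^ K n / real n)"
        by (simp add: M_def)
      finally show "\<bar>measure_pmf.prob (P1 lam D (h n) n) A - measure_pmf.prob (P0 lam n) A\<bar> \<le> g n"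
        by (simp add: g_def)
    qed
  qed
  have part1: "(\<lambda>n. tv_dist (P1 lam D (h n) n) (P0 lam n)) \<longlonglongrightarrow> 0"
  proof (rule Lim_null_comparison[OF _ g])
    show "\<forall>\<^sub>F n in sequentially. norm (tv_dist (P1 lam D (h n) n) (P0 lam n)) \<le> g n"
      using bound
    proof eventually_elim
      case (elim n)
      let ?f = "\<lambda>A. \<bar>measure_pmf.prob (P1 lam D (h n) n) A - measure_pmf.prob (P0 lam n) A\<bar>"
      have bdd: "bdd_above (range ?f)" using elim by (intro bdd_aboveI2) auto
      have up: "tv_dist (P1 lam D (h n) n) (P0 lam n) \<le> g n"
        unfolding tv_dist_def using elim by (intro cSUP_least) auto
      have lo: "0 \<le> tv_dist (P1 lam D (h n) n) (P0 lam n)"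
        unfolding tv_dist_def by (rule cSUP_upper2[OF bdd, of "{}"]) auto
      show ?case using up lo by simp
    qed
  qed
  have part2: "(\<lambda>n. measure_pmf.prob (P1 lam D (h n) n) {G. T n G}
              - measure_pmf.prob (P0 lam n) {G. T n G}) \<longlonglongrightarrow> 0" for T :: "nat \<Rightarrow> nat set set \<Rightarrow> bool"
  proof (rule Lim_null_comparison[OF _ g])
    show "\<forall>\<^sub>F n in sequentially. norm (measure_pmf.prob (P1 lam D (h n) n) {G. T n G}
              - measure_pmf.prob (P0 lam n) {G. T n G}) \<le> g n"
      using bound by eventually_elim simp
  qed
  show ?thesis using part1 part2 by blast
qed

end
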